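(* Let $L>0$, $g\in L^2(0,L;\mathbb{C})$, $\lambda_0=\int_0^L\overline{g(x)}dx$, $\lambda_k=\frac{2ik\pi}{L}$ for $k\in\mathbb{Z}\setminus\{0\}$, and assume $\lambda_0\ne\lambda_k$ for all $k\ne0$. Define $\phi_0(x)=1$ and, for $k\ne0$, $\phi_k(x)=e^{-\lambda_kx}+\frac{1}{\lambda_k-\lambda_0}\int_0^L\overline{g(s)}e^{-\lambda_ks}ds$ (these are the eigenfunctions of $\tilde A^*$). Then: (1) $\{\phi_k\}_{k\in\mathbb{Z}}$ is a Riesz basis of $L^2(0,L)$; (2) if $1+\frac{1}{\lambda_k-\lambda_0}\int_0^L\overline{g(x)}e^{-\lambda_kx}dx\ne0$ for all $k\ne0$, then $\inf_{k\in\mathbb{Z}}|\tilde B^*\phi_k|>0$; (3) $\{e^{-\overline{\lambda_k}t}\}_{k\in\mathbb{Z}}$ is a Riesz basis of $L^2(0,L)$.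
   Context: $\tilde A^*$ is the operator on $L^2(0,L)$ with domain $\{z\in H^1(0,L):z(L)=z(0)\}$, $\tilde A^*z(x)=-z'(x)+\int_0^L\overline{g(y)}z(y)dy$; $\tilde B^*z=z(L)$. A Riesz basis of a Hilbert space is the image of an orthonormal basis under a bounded invertible linear operator. *)

theory Defs
  imports "HOL-Analysis.Analysis"
begin

text \<open>Concrete model of the Hilbert space L^2(0,L;C): complex-valued functions on the reals,
  considered on [0,L] with Lebesgue measure, modulo equality almost everywhere.\<close>

definition L2 :: "real \<Rightarrow> (real \<Rightarrow> complex) set" where
  "L2 L = {f. f \<in> borel_measurable (lebesgue_on {0..L})
             \<and> integrable (lebesgue_on {0..L}) (\<lambda>x. (cmod (f x))\<^sup>2)}"

definition l2_inner :: "real \<Rightarrow> (real \<Rightarrow> complex) \<Rightarrow> (real \<Rightarrow> complex) \<Rightarrow> complex" where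
  "l2_inner L f g = (LINT x|lebesgue_on {0..L}. f x * cnj (g x))"

definition l2_norm :: "real \<Rightarrow> (real \<Rightarrow> complex) \<Rightarrow> real" where
  "l2_norm L f = sqrt (LINT x|lebesgue_on {0..L}. (cmod (f x))\<^sup>2)"

definition ae_eq :: "real \<Rightarrow> (real \<Rightarrow> complex) \<Rightarrow> (real \<Rightarrow> complex) \<Rightarrow> bool" where
  "ae_eq L f g \<longleftrightarrow> (AE x in lebesgue_on {0..L}. f x = g x)"

definition orthonormal_basis :: "real \<Rightarrow> (int \<Rightarrow> real \<Rightarrow> complex) \<Rightarrow> bool" where
  "orthonormal_basis L e \<longleftrightarrow>
     (\<forall>k. e k \<in> L2 L)
     \<and> (\<forall>j k. l2_inner L (e j) (e k) = (if j = k then 1 else 0))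
     \<and> (\<forall>f\<in>L2 L. \<forall>\<epsilon>>0. \<exists>F c. finite F \<and>
           l2_norm L (\<lambda>x. f x - (\<Sum>k\<in>F. c k * e k x)) < \<epsilon>)"

definition bounded_linear_L2 :: "real \<Rightarrow> ((real \<Rightarrow> complex) \<Rightarrow> (real \<Rightarrow> complex)) \<Rightarrow> bool" where
  "bounded_linear_L2 L T \<longleftrightarrow>
     (\<forall>f\<in>L2 L. T f \<in> L2 L)
     \<and> (\<forall>f\<in>L2 L. \<forall>g\<in>L2 L. ae_eq L f g \<longrightarrow> ae_eq L (T f) (T g))
     \<and> (\<forall>f\<in>L2 L. \<forall>g\<in>L2 L. \<forall>a b::complex.
          ae_eq L (T (\<lambda>x. a * f x + b * g x)) (\<lambda>x. a * T f x + b * T g x))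
     \<and> (\<exists>C. \<forall>f\<in>L2 L. l2_norm L (T f) \<le> C * l2_norm L f)"

definition riesz_basis :: "real \<Rightarrow> (int \<Rightarrow> real \<Rightarrow> complex) \<Rightarrow> bool" where
  "riesz_basis L \<phi> \<longleftrightarrow>
     (\<exists>e T S. orthonormal_basis L e
        \<and> bounded_linear_L2 L T \<and> bounded_linear_L2 L S
        \<and> (\<forall>f\<in>L2 L. ae_eq L (S (T f)) f \<and> ae_eq L (T (S f)) f)
        \<and> (\<forall>k. ae_eq L (T (e k)) (\<phi> k)))"

definition lam :: "real \<Rightarrow> (real \<Rightarrow> complex) \<Rightarrow> int \<Rightarrow> complex" where
  "lam L g k = (if k = 0 then (LINT x|lebesgue_on {0..L}. cnj (g x))
                else 2 * \<i> * of_int k * of_real pi / of_real L)"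

definition phi :: "real \<Rightarrow> (real \<Rightarrow> complex) \<Rightarrow> int \<Rightarrow> real \<Rightarrow> complex" where
  "phi L g k x = (if k = 0 then 1
     else exp (- lam L g k * of_real x)
          + 1 / (lam L g k - lam L g 0)
            * (LINT s|lebesgue_on {0..L}. cnj (g s) * exp (- lam L g k * of_real s)))"

end

theory Submission
  imports Defs
begin

lemma fm_on: "finite_measure (lebesgue_on {a..b::real})"
  by (rule finite_measure_lebesgue_on) auto

lemma space_on[simp]: "space (lebesgue_on {a..b::real}) = {a..b}"
  by simp

lemma measure_space_on: "a \<le> b \<Longrightarrow> measure (lebesgue_on {a..b::real}) {a..b} = b - a"
  by (simp add: measure_restrict_space)

lemma LINT_const_on: "a \<le> b \<Longrightarrow> (LINT x|lebesgue_on {a..b::real}. (c::complex)) = of_real (b - a) * c"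
  using measure_space_on[of a b] by (simp add: scaleR_conv_of_real)

lemma LINT_const_on_real: "a \<le> b \<Longrightarrow> (LINT x|lebesgue_on {a..b::real}. (c::real)) = (b - a) * c"
  using measure_space_on[of a b] by simp

lemma L2_D:
  assumes "f \<in> L2 L"
  shows "f \<in> borel_measurable (lebesgue_on {0..L})"
    "integrable (lebesgue_on {0..L}) (\<lambda>x. (cmod (f x))\<^sup>2)"
  using assms by (auto simp: L2_def)

lemma sq_bound_aux: "(t::real) \<le> 1 + t\<^sup>2"
proof (cases "t \<le> 0")
  case True then show ?thesis by (metis add_increasing zero_le_one zero_le_power2 order_trans)
next
  case False
  then show ?thesis using zero_le_power2[of "t - 1"] power2_diff[of t 1] by simp
qed

lemma L2_integrable:
  assumes "f \<in> L2 L"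
  shows "integrable (lebesgue_on {0..L}) f"
proof -
  have "integrable (lebesgue_on {0..L}) (\<lambda>x. 1 + (cmod (f x))\<^sup>2)"
    using L2_D[OF assms] by (intro Bochner_Integration.integrable_add finite_measure.integrable_const fm_on)
  then show ?thesis
  proof (rule Bochner_Integration.integrable_bound)
    show "f \<in> borel_measurable (lebesgue_on {0..L})" using L2_D[OF assms] by simp
    show "AE x in lebesgue_on {0..L}. norm (f x) \<le> norm (1 + (cmod (f x))\<^sup>2)"
      by (intro AE_I2) (simp add: sq_bound_aux add_nonneg_nonneg)
  qed
qed

lemma L2_integrable_norm:
  assumes "f \<in> L2 L"
  shows "integrable (lebesgue_on {0..L}) (\<lambda>x. cmod (f x))"
  using L2_integrable[OF assms] by simp

lemma L2_I:
  assumes "f \<in> borel_measurable (lebesgue_on {0..L})"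
    and "integrable (lebesgue_on {0..L}) g"
    and "\<And>x. x \<in> {0..L} \<Longrightarrow> (cmod (f x))\<^sup>2 \<le> g x"
  shows "f \<in> L2 L"
  unfolding L2_def
proof (safe)
  show "f \<in> borel_measurable (lebesgue_on {0..L})" by fact
  show "integrable (lebesgue_on {0..L}) (\<lambda>x. (cmod (f x))\<^sup>2)"
  proof (rule Bochner_Integration.integrable_bound[OF assms(2)])
    show "(\<lambda>x. (cmod (f x))\<^sup>2) \<in> borel_measurable (lebesgue_on {0..L})"
      using assms(1) by measurable
    show "AE x in lebesgue_on {0..L}. norm ((cmod (f x))\<^sup>2) \<le> norm (g x)"
      using assms(3) by (intro AE_I2) force
  qed
qed

lemma sq_add_le: "(cmod (a + b))\<^sup>2 \<le> 2 * (cmod a)\<^sup>2 + 2 * (cmod b)\<^sup>2"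
proof -
  have "cmod (a + b) \<le> cmod a + cmod b" by (rule norm_triangle_ineq)
  then have "(cmod (a + b))\<^sup>2 \<le> (cmod a + cmod b)\<^sup>2"
    by (simp add: power_mono)
  also have "\<dots> \<le> 2 * (cmod a)\<^sup>2 + 2 * (cmod b)\<^sup>2"
    using power2_sum[of "cmod a" "cmod b"] power2_diff[of "cmod a" "cmod b"] zero_le_power2[of "cmod a - cmod b"] by linarith
  finally show ?thesis .
qed

lemma sq_add3_le: "(cmod (a + b + c))\<^sup>2 \<le> 3 * (cmod a)\<^sup>2 + 3 * (cmod b)\<^sup>2 + 3 * (cmod c)\<^sup>2"
proof -
  have "cmod (a + b + c) \<le> cmod a + cmod b + cmod c"
    by (metis add_mono norm_triangle_ineq order_trans order_refl)
  then have "(cmod (a + b + c))\<^sup>2 \<le> (cmod a + cmod b + cmod c)\<^sup>2"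
    by (simp add: power_mono)
  also have "\<dots> \<le> 3 * (cmod a)\<^sup>2 + 3 * (cmod b)\<^sup>2 + 3 * (cmod c)\<^sup>2"
  proof -
    fix x y z :: real
    have e: "\<And>x y z::real. (x + y + z)\<^sup>2 = x\<^sup>2 + y\<^sup>2 + z\<^sup>2 + 2*x*y + 2*y*z + 2*x*z"
      by (simp add: power2_eq_square algebra_simps)
    have d: "\<And>x y::real. (x - y)\<^sup>2 = x\<^sup>2 + y\<^sup>2 - 2*x*y"
      by (simp add: power2_eq_square algebra_simps)
    show ?thesis
      using e[of "cmod a" "cmod b" "cmod c"] d[of "cmod a" "cmod b"] d[of "cmod b" "cmod c"] d[of "cmod a" "cmod c"]
        zero_le_power2[of "cmod a - cmod b"] zero_le_power2[of "cmod b - cmod c"] zero_le_power2[of "cmod a - cmod c"]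
      by linarith
  qed
  finally show ?thesis .
qed

lemma L2_lincomb:
  assumes "f \<in> L2 L" "g \<in> L2 L"
  shows "(\<lambda>x. a * f x + b * g x) \<in> L2 L"
proof (rule L2_I)
  show "(\<lambda>x. a * f x + b * g x) \<in> borel_measurable (lebesgue_on {0..L})"
    using L2_D[OF assms(1)] L2_D[OF assms(2)] by measurable
  show "integrable (lebesgue_on {0..L}) (\<lambda>x. 2 * (cmod a)\<^sup>2 * (cmod (f x))\<^sup>2 + 2 * (cmod b)\<^sup>2 * (cmod (g x))\<^sup>2)"
    using L2_D[OF assms(1)] L2_D[OF assms(2)] by (intro Bochner_Integration.integrable_add integrable_mult_right)
  fix x
  have "(cmod (a * f x + b * g x))\<^sup>2 \<le> 2 * (cmod (a * f x))\<^sup>2 + 2 * (cmod (b * g x))\<^sup>2"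
    by (rule sq_add_le)
  then show "(cmod (a * f x + b * g x))\<^sup>2 \<le> 2 * (cmod a)\<^sup>2 * (cmod (f x))\<^sup>2 + 2 * (cmod b)\<^sup>2 * (cmod (g x))\<^sup>2"
    by (simp add: norm_mult power_mult_distrib)
qed

lemma L2_bounded:
  assumes "f \<in> borel_measurable (lebesgue_on {0..L})" "\<And>x. x \<in> {0..L} \<Longrightarrow> cmod (f x) \<le> B"
  shows "f \<in> L2 L"
proof (rule L2_I[OF assms(1)])
  show "integrable (lebesgue_on {0..L}) (\<lambda>x. B\<^sup>2)"
    by (intro finite_measure.integrable_const fm_on)
  fix x assume "x \<in> {0..L}"
  then show "(cmod (f x))\<^sup>2 \<le> B\<^sup>2" using assms(2) by (simp add: power_mono)
qed

lemma L2_cont: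
  assumes "continuous_on {0..L} f"
  shows "f \<in> L2 L"
proof -
  have "compact (f ` {0..L})" using assms by (intro compact_continuous_image) auto
  then obtain B where "\<forall>y\<in>f ` {0..L}. norm y \<le> B"
    using compact_imp_bounded bounded_iff by metis
  then show ?thesis
    by (intro L2_bounded[where B=B] continuous_imp_measurable_on_sets_lebesgue assms) auto
qed

lemma L2_const: "(\<lambda>x. c) \<in> L2 L"
  by (rule L2_cont) simp

lemma L2_cmult: "f \<in> L2 L \<Longrightarrow> (\<lambda>x. a * f x) \<in> L2 L"
  using L2_lincomb[of f L f a 0] by simp

lemma L2_add: "f \<in> L2 L \<Longrightarrow> g \<in> L2 L \<Longrightarrow> (\<lambda>x. f x + g x) \<in> L2 L"
  using L2_lincomb[of f L g 1 1] by simp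

lemma L2_diff: "f \<in> L2 L \<Longrightarrow> g \<in> L2 L \<Longrightarrow> (\<lambda>x. f x - g x) \<in> L2 L"
  using L2_lincomb[of f L g 1 "-1"] by simp

lemma L2_int_nonneg: "0 \<le> (LINT x|lebesgue_on {0..L}. (cmod (f x))\<^sup>2)"
  by (intro integral_nonneg_AE) auto

lemma L1_L2:
  assumes "f \<in> L2 L" "0 < L"
  shows "(LINT x|lebesgue_on {0..L}. cmod (f x))\<^sup>2 \<le> L * (LINT x|lebesgue_on {0..L}. (cmod (f x))\<^sup>2)"
proof -
  have L: "L > 0" using assms by simp
  define A where "A = (LINT x|lebesgue_on {0..L}. cmod (f x))"
  define B where "B = (LINT x|lebesgue_on {0..L}. (cmod (f x))\<^sup>2)"
  define m where "m = A / L"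
  have i1: "integrable (lebesgue_on {0..L}) (\<lambda>x. cmod (f x))" by (rule L2_integrable_norm[OF assms(1)])
  have i2: "integrable (lebesgue_on {0..L}) (\<lambda>x. (cmod (f x))\<^sup>2)" by (rule L2_D[OF assms(1)])
  have "0 \<le> (LINT x|lebesgue_on {0..L}. (cmod (f x) - m)\<^sup>2)"
    by (intro integral_nonneg_AE) auto
  also have "(LINT x|lebesgue_on {0..L}. (cmod (f x) - m)\<^sup>2)
     = (LINT x|lebesgue_on {0..L}. (cmod (f x))\<^sup>2 + ((- 2 * m) * cmod (f x) + m\<^sup>2))"
    by (intro Bochner_Integration.integral_cong) (auto simp: power2_diff)
  also have "\<dots> = B + ((- 2 * m) * A + L * m\<^sup>2)"
    using i1 i2 L
    by (simp add: A_def B_def Bochner_Integration.integral_add integrable_mult_right fm_on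
        finite_measure.integrable_const LINT_const_on_real measure_space_on)
  finally have "0 \<le> B + ((- 2 * m) * A + L * m\<^sup>2)" .
  also have "B + ((- 2 * m) * A + L * m\<^sup>2) = (L * B - A\<^sup>2) / L"
    using L unfolding m_def by (simp add: field_simps power2_eq_square)
  finally have "0 \<le> L * B - A\<^sup>2" using L by (simp add: zero_le_divide_iff)
  then show ?thesis by (simp add: A_def B_def)
qed



definition wj :: "real \<Rightarrow> int \<Rightarrow> complex" where
  "wj L j = 2 * \<i> * of_int j * of_real pi / of_real L"

definition ee :: "real \<Rightarrow> int \<Rightarrow> real \<Rightarrow> complex" where
  "ee L j t = exp (wj L j * of_real t)"

lemma lam_nz: "k \<noteq> 0 \<Longrightarrow> lam L g k = wj L k"
  by (simp add: lam_def wj_def)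

lemma wj_alt: "wj L j = \<i> * of_real (2 * pi * of_int j / L)"
  by (simp add: wj_def)

lemma wj_uminus: "wj L (- j) = - wj L j"
  by (simp add: wj_def)

lemma wj_add: "wj L (j + k) = wj L j + wj L k"
  by (simp add: wj_def ring_distribs add_divide_distrib)

lemma wj_diff: "wj L (j - k) = wj L j - wj L k"
  by (simp add: wj_def ring_distribs diff_divide_distrib)

lemma wj_eq_0: "L \<noteq> 0 \<Longrightarrow> wj L j = 0 \<longleftrightarrow> j = 0"
  by (simp add: wj_def)

lemma wj_inj: "L \<noteq> 0 \<Longrightarrow> wj L j = wj L k \<longleftrightarrow> j = k"
  using wj_eq_0[of L "j - k"] by (simp add: wj_diff)

lemma ee_mult: "ee L j t * ee L k t = ee L (j + k) t"
  by (simp add: ee_def wj_add exp_add[symmetric] distrib_right)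

lemma cnj_wj: "cnj (wj L j) = - wj L j"
  by (simp add: wj_def)

lemma cnj_ee: "cnj (ee L j t) = ee L (- j) t"
  by (simp add: ee_def exp_cnj cnj_wj wj_uminus)

lemma Re_wj0: "Re (wj L j) = 0"
  by (simp add: wj_def)

lemma Re_wj: "Re (wj L j * of_real t) = 0"
  using Re_wj0[of L j] by simp

lemma norm_ee: "cmod (ee L j t) = 1"
  using Re_wj[of L j t] by (simp only: ee_def norm_exp_eq_Re) simp

lemma ee_0 [simp]: "ee L 0 t = 1"
  by (simp add: ee_def wj_def)

lemma ee_at0 [simp]: "ee L j 0 = 1"
  by (simp add: ee_def)

lemma ee_L: "L \<noteq> 0 \<Longrightarrow> ee L j L = 1"
proof -
  assume L: "L \<noteq> 0"
  have "wj L j * of_real L = (2 * of_int j * pi) * \<i>"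
    using L by (simp add: wj_def field_simps)
  then show ?thesis unfolding ee_def
    using exp_integer_2pi[of "of_int j"] by simp
qed

lemma exp_wj_L: "L \<noteq> 0 \<Longrightarrow> exp (wj L j * of_real L) = 1"
  using ee_L[of L j] by (simp add: ee_def)

lemma cont_ee [continuous_intros]: "continuous_on S (ee L j)"
  unfolding ee_def by (intro continuous_intros)

lemma ee_L2: "ee L j \<in> L2 L"
  by (intro L2_cont cont_ee)

lemma int_exp_on:
  fixes a :: complex
  assumes "0 \<le> T"
  shows "(LINT x|lebesgue_on {0..T}. exp (a * of_real x)) =
         (if a = 0 then of_real T else (exp (a * of_real T) - 1) / a)"
proof -
  have i: "integrable (lebesgue_on {0..T}) (\<lambda>x. exp (a * of_real x))"
    by (intro continuous_imp_integrable_real continuous_intros)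
  show ?thesis
  proof (cases "a = 0")
    case True
    then show ?thesis using assms by (simp add: measure_space_on scaleR_conv_of_real)
  next
    case False
    then show ?thesis
      using lebesgue_integral_eq_integral[OF i] integral_exp[OF assms False] by simp
  qed
qed

lemma int_ee:
  assumes "L > 0"
  shows "(LINT x|lebesgue_on {0..L}. ee L j x) = (if j = 0 then of_real L else 0)"
proof -
  have L: "L \<noteq> 0" using assms by simp
  show ?thesis
    using int_exp_on[of L "wj L j"] assms wj_eq_0[OF L, of j] exp_wj_L[OF L, of j]
    by (simp add: ee_def[abs_def])
qed

definition bas :: "real \<Rightarrow> int \<Rightarrow> real \<Rightarrow> complex" where
  "bas L j x = ee L j x / of_real (sqrt L)"

lemma bas_L2: "bas L j \<in> L2 L"
proof -
  have "bas L j = (\<lambda>x. inverse (of_real (sqrt L)) * ee L j x)"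
    by (simp add: bas_def divide_inverse mult.commute fun_eq_iff)
  then show ?thesis using L2_cmult[OF ee_L2] by simp
qed

lemma sqrt_sq_c: "0 \<le> L \<Longrightarrow> complex_of_real (sqrt L) * complex_of_real (sqrt L) = of_real L"
  by (simp flip: of_real_mult)

lemma inner_bas:
  assumes "L > 0"
  shows "l2_inner L (bas L j) (bas L k) = (if j = k then 1 else 0)"
proof -
  have "l2_inner L (bas L j) (bas L k) = (LINT x|lebesgue_on {0..L}. ee L (j - k) x / of_real L)"
    unfolding l2_inner_def bas_def
    using assms by (intro Bochner_Integration.integral_cong)
        (auto simp: cnj_ee sqrt_sq_c ee_mult)
  also have "\<dots> = (LINT x|lebesgue_on {0..L}. ee L (j - k) x) / of_real L"
    by (rule integral_divide_zero)
  also have "\<dots> = (if j = k then 1 else 0)"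
    using assms by (simp add: int_ee)
  finally show ?thesis .
qed



definition TP :: "real \<Rightarrow> (real \<Rightarrow> complex) \<Rightarrow> bool" where
  "TP L P \<longleftrightarrow> (\<exists>F c. finite F \<and> (\<forall>t. P t = (\<Sum>j\<in>F. c j * ee L j t)))"

lemma TP_ee: "TP L (\<lambda>t. a * ee L j t)"
  unfolding TP_def by (intro exI[of _ "{j}"] exI[of _ "\<lambda>_. a"]) simp

lemma TP_const: "TP L (\<lambda>t. a)"
  using TP_ee[of L a 0] by simp

lemma TP_add:
  assumes "TP L P" "TP L Q"
  shows "TP L (\<lambda>t. P t + Q t)"
proof -
  obtain F c where F: "finite F" "\<And>t. P t = (\<Sum>j\<in>F. c j * ee L j t)"
    using assms(1) unfolding TP_def by blast
  obtain G d where G: "finite G" "\<And>t. Q t = (\<Sum>j\<in>G. d j * ee L j t)"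
    using assms(2) unfolding TP_def by blast
  define c' where "c' j = (if j \<in> F then c j else 0) + (if j \<in> G then d j else 0)" for j
  have "P t + Q t = (\<Sum>j\<in>F \<union> G. c' j * ee L j t)" for t
  proof -
    have 1: "(\<Sum>j\<in>F. c j * ee L j t) = (\<Sum>j\<in>F \<union> G. (if j \<in> F then c j else 0) * ee L j t)"
      using F(1) G(1) by (intro sum.mono_neutral_cong_left) auto
    have 2: "(\<Sum>j\<in>G. d j * ee L j t) = (\<Sum>j\<in>F \<union> G. (if j \<in> G then d j else 0) * ee L j t)"
      using F(1) G(1) by (intro sum.mono_neutral_cong_left) auto
    show ?thesis unfolding F(2) G(2) 1 2 c'_def
      by (simp add: sum.distrib[symmetric] distrib_right)
  qed
  then show ?thesis unfolding TP_def using F(1) G(1) by (intro exI[of _ "F \<union> G"] exI[of _ c']) auto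
qed

lemma TP_cmult:
  assumes "TP L P"
  shows "TP L (\<lambda>t. a * P t)"
proof -
  obtain F c where F: "finite F" "\<And>t. P t = (\<Sum>j\<in>F. c j * ee L j t)"
    using assms(1) unfolding TP_def by blast
  have "a * P t = (\<Sum>j\<in>F. (a * c j) * ee L j t)" for t
    unfolding F(2) by (simp add: sum_distrib_left mult.assoc)
  then show ?thesis unfolding TP_def using F(1) by (intro exI[of _ F] exI[of _ "\<lambda>j. a * c j"]) auto
qed

lemma TP_sum:
  assumes "finite I" "\<And>i. i \<in> I \<Longrightarrow> TP L (P i)"
  shows "TP L (\<lambda>t. \<Sum>i\<in>I. P i t)"
  using assms
proof (induction I rule: finite_induct)
  case empty
  then show ?case using TP_const[of L 0] by simp
next
  case (insert x F)
  have "TP L (\<lambda>t. P x t + (\<Sum>i\<in>F. P i t))"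
    using insert by (intro TP_add) auto
  then show ?case using insert(1,2) by simp
qed

lemma TP_mult:
  assumes "TP L P" "TP L Q"
  shows "TP L (\<lambda>t. P t * Q t)"
proof -
  obtain F c where F: "finite F" "\<And>t. P t = (\<Sum>j\<in>F. c j * ee L j t)"
    using assms(1) unfolding TP_def by blast
  obtain G d where G: "finite G" "\<And>t. Q t = (\<Sum>j\<in>G. d j * ee L j t)"
    using assms(2) unfolding TP_def by blast
  have eq: "P t * Q t = (\<Sum>i\<in>F. \<Sum>j\<in>G. (c i * d j) * ee L (i + j) t)" for t
    unfolding F(2) G(2) sum_product
    by (intro sum.cong refl) (simp add: ee_mult[symmetric] mult_ac)
  have "TP L (\<lambda>t. \<Sum>i\<in>F. \<Sum>j\<in>G. (c i * d j) * ee L (i + j) t)"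
    using F(1) G(1) by (intro TP_sum TP_ee) auto
  then show ?thesis unfolding eq[abs_def] .
qed

lemma blin_complex:
  assumes "bounded_linear (q :: complex \<Rightarrow> real)"
  shows "q z = Re z * q 1 + Im z * q \<i>"
proof -
  interpret bounded_linear q by fact
  have "z = Re z *\<^sub>R 1 + Im z *\<^sub>R \<i>"
    by (simp add: complex_eq_iff)
  then have "q z = q (Re z *\<^sub>R 1 + Im z *\<^sub>R \<i>)" by simp
  also have "\<dots> = Re z * q 1 + Im z * q \<i>"
    by (simp add: add scaleR)
  finally show ?thesis .
qed

lemma Re_ee1: "complex_of_real (Re (ee L 1 t)) = (ee L 1 t + ee L (-1) t) / 2"
  using complex_add_cnj[of "ee L 1 t"] by (simp add: cnj_ee)

lemma Im_ee1: "complex_of_real (Im (ee L 1 t)) = (ee L 1 t - ee L (-1) t) / (2 * \<i>)"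
  using complex_diff_cnj[of "ee L 1 t"] by (simp add: cnj_ee field_simps)

lemma TP_Re: "TP L (\<lambda>t. complex_of_real (Re (ee L 1 t)))"
  unfolding Re_ee1 using TP_add[OF TP_ee[of L "1/2" 1] TP_ee[of L "1/2" "-1"]]
  by (simp add: add_divide_distrib)

lemma TP_Im: "TP L (\<lambda>t. complex_of_real (Im (ee L 1 t)))"
proof -
  have "(\<lambda>t. complex_of_real (Im (ee L 1 t))) = (\<lambda>t. (1/(2*\<i>)) * ee L 1 t + (-1/(2*\<i>)) * ee L (-1) t)"
    unfolding Im_ee1 by (simp add: fun_eq_iff field_simps)
  then show ?thesis using TP_add[OF TP_ee[of L "1/(2*\<i>)" 1] TP_ee[of L "-1/(2*\<i>)" "-1"]]
    by simp
qed

lemma TP_realpoly: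
  assumes "real_polynomial_function q"
  shows "TP L (\<lambda>t. complex_of_real (q (ee L 1 t)))"
  using assms
proof (induction rule: real_polynomial_function.induct)
  case (linear f)
  have "TP L (\<lambda>t. of_real (f 1) * complex_of_real (Re (ee L 1 t)) + of_real (f \<i>) * complex_of_real (Im (ee L 1 t)))"
    by (intro TP_add TP_cmult TP_Re TP_Im)
  moreover have "complex_of_real (f (ee L 1 t)) = of_real (f 1) * complex_of_real (Re (ee L 1 t)) + of_real (f \<i>) * complex_of_real (Im (ee L 1 t))" for t
    by (subst blin_complex[OF linear, of "ee L 1 t"]) (simp add: mult.commute)
  ultimately show ?case by simp
next
  case (const c)
  then show ?case using TP_const by simp
next
  case (add f g)
  show ?case using TP_add[OF add(3) add(4)] by simp
next
  case (mult f g)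
  show ?case using TP_mult[OF mult(3) mult(4)] by simp
qed

lemma TP_poly:
  assumes "polynomial_function (p :: complex \<Rightarrow> complex)"
  shows "TP L (\<lambda>t. p (ee L 1 t))"
proof -
  have a: "\<forall>f. bounded_linear f \<longrightarrow> real_polynomial_function (f \<circ> p)"
    using assms by (simp add: polynomial_function_def)
  have r: "real_polynomial_function (Re \<circ> p)" "real_polynomial_function (Im \<circ> p)"
    using a[rule_format, OF bounded_linear_Re] a[rule_format, OF bounded_linear_Im] by auto
  have "TP L (\<lambda>t. complex_of_real ((Re \<circ> p) (ee L 1 t)) + \<i> * complex_of_real ((Im \<circ> p) (ee L 1 t)))"
    by (intro TP_add TP_cmult TP_realpoly r)
  moreover have "(\<lambda>t. complex_of_real ((Re \<circ> p) (ee L 1 t)) + \<i> * complex_of_real ((Im \<circ> p) (ee L 1 t))) = (\<lambda>t. p (ee L 1 t))"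
    by (simp add: complex_eq_iff fun_eq_iff)
  ultimately show ?thesis by simp
qed

lemma ee1_period:
  assumes "L > 0" "ee L 1 s = ee L 1 t"
  shows "\<exists>n::int. s - t = of_int n * L"
proof -
  have "ee L 1 s = ee L 1 t * exp (wj L 1 * of_real (s - t))"
    by (simp add: ee_def exp_add[symmetric] ring_distribs)
  then have "exp (wj L 1 * of_real (s - t)) = 1"
    using assms(2) by (metis exp_not_eq_zero ee_def mult_cancel_left1)
  then obtain n :: int where "Im (wj L 1 * of_real (s - t)) = of_int (2 * n) * pi"
    by (auto simp: exp_eq_1)
  then have "2 * pi * (s - t) / L = 2 * of_int n * pi"
    by (simp add: wj_def)
  then have "(2 * pi) * (s - t) = (2 * pi) * (of_int n * L)"
    using assms(1) by (simp add: field_simps)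
  then have "s - t = of_int n * L"
    by simp
  then show ?thesis by blast
qed

lemma ee1_cases:
  assumes "L > 0" "s \<in> {0..L}" "t \<in> {0..L}" "ee L 1 s = ee L 1 t"
  shows "s = t \<or> (s = 0 \<and> t = L) \<or> (s = L \<and> t = 0)"
proof -
  obtain n :: int where n: "s - t = of_int n * L"
    using ee1_period[OF assms(1,4)] by blast
  have "of_int n * L \<le> 1 * L" "-1 * L \<le> of_int n * L"
    using assms(2,3) n by auto
  have "\<not> (of_int n > (1::real))"
  proof
    assume "of_int n > (1::real)"
    then have "1 * L < of_int n * L" by (rule mult_strict_right_mono[OF _ assms(1)])
    then show False using \<open>of_int n * L \<le> 1 * L\<close> by simp
  qed
  moreover have "\<not> (of_int n < (-1::real))"
  proof
    assume "of_int n < (-1::real)"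
    then have "of_int n * L < -1 * L" by (rule mult_strict_right_mono[OF _ assms(1)])
    then show False using \<open>-1 * L \<le> of_int n * L\<close> by simp
  qed
  ultimately have "of_int n \<le> (1::real)" "-1 \<le> (of_int n :: real)" by auto
  then have "n = -1 \<or> n = 0 \<or> n = 1" by linarith
  then show ?thesis using n assms(2,3) by auto
qed

lemma trig_approx:
  assumes L: "L > 0" and k: "continuous_on {0..L} k" and per: "k 0 = k L" and eta: "\<eta> > 0"
  shows "\<exists>P. TP L P \<and> (\<forall>t\<in>{0..L}. cmod (k t - P t) < \<eta>)"
proof -
  define \<tau> where "\<tau> = ee L 1"
  define I1 where "I1 = {0..L/2}"
  define I2 where "I2 = {L/2..L}"
  have I1: "I1 \<subseteq> {0..L}" and I2: "I2 \<subseteq> {0..L}" using L by (auto simp: I1_def I2_def)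
  have ct: "continuous_on S \<tau>" for S unfolding \<tau>_def by (rule cont_ee)
  have inj1: "inj_on \<tau> I1"
  proof (rule inj_onI)
    fix s t assume "s \<in> I1" "t \<in> I1" "\<tau> s = \<tau> t"
    then show "s = t" using ee1_cases[OF L, of s t] L unfolding \<tau>_def I1_def by auto
  qed
  have inj2: "inj_on \<tau> I2"
  proof (rule inj_onI)
    fix s t assume "s \<in> I2" "t \<in> I2" "\<tau> s = \<tau> t"
    then show "s = t" using ee1_cases[OF L, of s t] L unfolding \<tau>_def I2_def by auto
  qed
  define A1 where "A1 = \<tau> ` I1"
  define A2 where "A2 = \<tau> ` I2"
  define i1 where "i1 = the_inv_into I1 \<tau>"
  define i2 where "i2 = the_inv_into I2 \<tau>"
  have cA1: "compact A1" unfolding A1_def I1_def by (intro compact_continuous_image ct) auto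
  have cA2: "compact A2" unfolding A2_def I2_def by (intro compact_continuous_image ct) auto
  have ci1: "continuous_on A1 i1" unfolding A1_def i1_def
    by (rule continuous_on_inv_into[OF ct _ inj1]) (auto simp: I1_def)
  have ci2: "continuous_on A2 i2" unfolding A2_def i2_def
    by (rule continuous_on_inv_into[OF ct _ inj2]) (auto simp: I2_def)
  have i1_in: "i1 z \<in> I1" if "z \<in> A1" for z
    using that unfolding A1_def i1_def by (auto intro: the_inv_into_into[OF inj1])
  have i2_in: "i2 z \<in> I2" if "z \<in> A2" for z
    using that unfolding A2_def i2_def by (auto intro: the_inv_into_into[OF inj2])
  have i1_f: "i1 (\<tau> t) = t" if "t \<in> I1" for t
    unfolding i1_def using the_inv_into_f_f[OF inj1 that] .
  have i2_f: "i2 (\<tau> t) = t" if "t \<in> I2" for t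
    unfolding i2_def using the_inv_into_f_f[OF inj2 that] .
  define H where "H z = (if z \<in> A1 then k (i1 z) else k (i2 z))" for z
  have kc1: "continuous_on A1 (\<lambda>z. k (i1 z))"
    by (rule continuous_on_compose2[OF k ci1]) (use i1_in I1 in auto)
  have kc2: "continuous_on A2 (\<lambda>z. k (i2 z))"
    by (rule continuous_on_compose2[OF k ci2]) (use i2_in I2 in auto)
  have agree: "k (i1 z) = k (i2 z)" if "z \<in> A1" "z \<in> A2" for z
  proof -
    have "z \<in> \<tau> ` I1" using that(1) by (simp add: A1_def)
    then obtain s where s: "s \<in> I1" "z = \<tau> s" by blast
    have "z \<in> \<tau> ` I2" using that(2) by (simp add: A2_def)
    then obtain t where t: "t \<in> I2" "z = \<tau> t" by blast
    have st: "s \<in> {0..L}" "t \<in> {0..L}" using s(1) t(1) I1 I2 by auto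
    have "ee L 1 s = ee L 1 t" using s(2) t(2) unfolding \<tau>_def by simp
    then have "s = t \<or> (s = 0 \<and> t = L) \<or> (s = L \<and> t = 0)"
      using ee1_cases[OF L st] by blast
    then have "k s = k t" using per by auto
    moreover have "i1 z = s" using s i1_f by simp
    moreover have "i2 z = t" using t i2_f by simp
    ultimately show ?thesis by simp
  qed
  have cH: "continuous_on (A1 \<union> A2) H"
    unfolding H_def
    by (rule continuous_on_cases[OF compact_imp_closed[OF cA1] compact_imp_closed[OF cA2] kc1 kc2])
      (use agree in auto)
  obtain p where p: "polynomial_function p" "\<forall>z\<in>A1 \<union> A2. norm (H z - p z) < \<eta>"
    using Stone_Weierstrass_polynomial_function[OF compact_Un[OF cA1 cA2] cH eta] by blast
  have Ht: "H (\<tau> t) = k t \<and> \<tau> t \<in> A1 \<union> A2" if t: "t \<in> {0..L}" for t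
  proof (cases "t \<in> I1")
    case True
    then show ?thesis using i1_f unfolding H_def A1_def by auto
  next
    case False
    then have tI2: "t \<in> I2" using t by (auto simp: I1_def I2_def)
    show ?thesis
    proof (cases "\<tau> t \<in> A1")
      case True
      then obtain s where s: "s \<in> I1" "\<tau> t = \<tau> s" unfolding A1_def by auto
      have "s = t \<or> (s = 0 \<and> t = L) \<or> (s = L \<and> t = 0)"
        using ee1_cases[OF L, of s t] s t I1 unfolding \<tau>_def by auto
      then have "s = 0 \<and> t = L" using s(1) False L by (auto simp: I1_def)
      then show ?thesis using True s i1_f per unfolding H_def by auto
    next
      case False
      then show ?thesis using tI2 i2_f unfolding H_def A2_def by auto
    qed
  qed
  have "TP L (\<lambda>t. p (\<tau> t))" unfolding \<tau>_def by (rule TP_poly[OF p(1)])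
  moreover have "\<forall>t\<in>{0..L}. cmod (k t - p (\<tau> t)) < \<eta>"
    using Ht p(2) by metis
  ultimately show ?thesis by blast
qed



lemma AE_on_iff: "(AE x in lebesgue_on {0..L::real}. P x) \<longleftrightarrow> (AE x in lebesgue. x \<in> {0..L} \<longrightarrow> P x)"
  by (rule AE_restrict_space_iff) simp

definition clip :: "real \<Rightarrow> complex \<Rightarrow> complex" where
  "clip B z = z * of_real (B / max B (cmod z))"

lemma clip_cont: "B > 0 \<Longrightarrow> continuous_on S (clip B)"
  unfolding clip_def by (intro continuous_intros) auto

lemma clip_bound: "B > 0 \<Longrightarrow> cmod (clip B z) \<le> B"
proof -
  assume B: "B > 0"
  have "cmod (clip B z) = cmod z * \<bar>B / max B (cmod z)\<bar>"
    unfolding clip_def norm_mult norm_of_real ..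
  also have "\<bar>B / max B (cmod z)\<bar> = B / max B (cmod z)"
    using B by (intro abs_of_nonneg divide_nonneg_nonneg) auto
  finally have "cmod (clip B z) = cmod z * (B / max B (cmod z))" .
  also have "\<dots> \<le> B"
  proof (cases "cmod z \<le> B")
    case True then show ?thesis using B by simp
  next
    case False then show ?thesis using B by simp
  qed
  finally show ?thesis .
qed

lemma clip_id: "B > 0 \<Longrightarrow> cmod z \<le> B \<Longrightarrow> clip B z = z"
  by (simp add: clip_def max_def)

definition psi :: "real \<Rightarrow> nat \<Rightarrow> real \<Rightarrow> real" where
  "psi L n x = min 1 (real (Suc n) / L * min x (L - x))"

lemma psi_cont: "continuous_on S (psi L n)"
  unfolding psi_def by (intro continuous_intros)

lemma psi_0: "L > 0 \<Longrightarrow> psi L n 0 = 0"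
  by (simp add: psi_def)

lemma psi_L: "L > 0 \<Longrightarrow> psi L n L = 0"
  by (simp add: psi_def)

lemma psi_range: "L > 0 \<Longrightarrow> x \<in> {0..L} \<Longrightarrow> 0 \<le> psi L n x \<and> psi L n x \<le> 1"
  by (auto simp: psi_def)

lemma psi_lim:
  assumes L: "L > 0" and x: "0 < x" "x < L"
  shows "(\<lambda>n. psi L n x) \<longlonglongrightarrow> 1"
proof (rule tendsto_eventually)
  define m where "m = min x (L - x)"
  have m: "m > 0" using x by (simp add: m_def)
  obtain N :: nat where N: "L / m < real N" using reals_Archimedean2 by blast
  have "psi L n x = 1" if "n \<ge> N" for n
  proof -
    have "L / m < real (Suc n)" using N that by simp
    then have "L < real (Suc n) * m" using m by (simp add: field_simps)
    then have "1 \<le> real (Suc n) / L * m" using L by (simp add: field_simps)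
    then show ?thesis unfolding psi_def m_def[symmetric] by simp
  qed
  then show "\<forall>\<^sub>F n in sequentially. psi L n x = 1"
    unfolding eventually_sequentially by blast
qed

lemma cont_approx:
  fixes L :: real and h :: "real \<Rightarrow> complex"
  assumes L: "L > 0" and hm: "h \<in> borel_measurable (lebesgue_on {0..L})"
    and hb: "\<And>x. x \<in> {0..L} \<Longrightarrow> cmod (h x) \<le> B" and e: "\<epsilon> > 0"
  shows "\<exists>k. continuous_on {0..L} k \<and> k 0 = k L \<and>
             (LINT x|lebesgue_on {0..L}. (cmod (h x - k x))\<^sup>2) < \<epsilon>"
proof -
  define B' where "B' = max B 1"
  have B': "B' > 0" by (simp add: B'_def)
  have hb': "cmod (h x) \<le> B'" if "x \<in> {0..L}" for x
    using hb[OF that] by (simp add: B'_def)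
  have Sl: "{0..L} \<in> sets lebesgue" by simp
  have "h measurable_on {0..L}"
    using measurable_on_iff_borel_measurable[OF Sl, of h] hm by simp
  then obtain N g where N: "negligible N" and gc: "\<And>n. continuous_on UNIV (g n)"
    and gl: "\<And>x. x \<notin> N \<Longrightarrow> (\<lambda>n. g n x) \<longlonglongrightarrow> (if x \<in> {0..L} then h x else 0)"
    unfolding measurable_on_def by blast
  define k where "k n x = complex_of_real (psi L n x) * clip B' (g n x)" for n x
  have kc: "continuous_on {0..L} (k n)" for n
  proof -
    have "continuous_on UNIV (\<lambda>x. clip B' (g n x))"
      by (rule continuous_on_compose2[OF clip_cont[OF B'] gc]) auto
    then have "continuous_on {0..L} (\<lambda>x. clip B' (g n x))"
      by (rule continuous_on_subset) auto
    then show ?thesis unfolding k_def by (intro continuous_intros psi_cont)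
  qed
  have k0: "k n 0 = k n L" for n using L by (simp add: k_def psi_0 psi_L)
  define s where "s n x = (cmod (h x - k n x))\<^sup>2" for n x
  have sm: "s n \<in> borel_measurable (lebesgue_on {0..L})" for n
  proof -
    have "k n \<in> borel_measurable (lebesgue_on {0..L})"
      by (intro continuous_imp_measurable_on_sets_lebesgue kc) auto
    then show ?thesis unfolding s_def using hm by measurable
  qed
  have bound: "norm (s n x) \<le> (2 * B')\<^sup>2" if "x \<in> {0..L}" for n x
  proof -
    have "cmod (k n x) \<le> B'"
    proof -
      have "cmod (k n x) = \<bar>psi L n x\<bar> * cmod (clip B' (g n x))" by (simp add: k_def norm_mult)
      also have "\<dots> \<le> 1 * B'"
        using psi_range[OF L that, of n] clip_bound[OF B'] by (intro mult_mono) auto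
      finally show ?thesis by simp
    qed
    then have "cmod (h x - k n x) \<le> 2 * B'"
      using hb'[OF that] norm_triangle_ineq4[of "h x" "k n x"] by linarith
    then have "(cmod (h x - k n x))\<^sup>2 \<le> (2 * B')\<^sup>2" by (intro power_mono) auto
    then show ?thesis unfolding s_def by simp
  qed
  have null: "N \<union> {0, L} \<in> null_sets lebesgue"
    using N negligible_iff_null_sets by (auto intro: null_sets.Un)
  have lim: "AE x in lebesgue_on {0..L}. (\<lambda>n. s n x) \<longlonglongrightarrow> 0"
    unfolding AE_on_iff
  proof (rule AE_mp[OF AE_not_in[OF null]], intro AE_I2 impI)
    fix x assume x: "x \<notin> N \<union> {0, L}" "x \<in> {0..L}"
    then have x': "0 < x" "x < L" by auto
    have "(\<lambda>n. clip B' (g n x)) \<longlonglongrightarrow> clip B' (h x)"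
      using gl[of x] x isCont_tendsto_compose[of "h x" "clip B'"]
        continuous_on_eq_continuous_at[of UNIV "clip B'"] clip_cont[OF B'] by auto
    then have "(\<lambda>n. k n x) \<longlonglongrightarrow> complex_of_real 1 * clip B' (h x)"
      unfolding k_def by (intro tendsto_intros psi_lim[OF L x'])
    then have "(\<lambda>n. k n x) \<longlonglongrightarrow> h x"
      using clip_id[OF B' hb'[OF x(2)]] by simp
    then have "(\<lambda>n. h x - k n x) \<longlonglongrightarrow> 0"
      using tendsto_diff[OF tendsto_const[of "h x"]] by fastforce
    then have "(\<lambda>n. (cmod (h x - k n x))\<^sup>2) \<longlonglongrightarrow> 0\<^sup>2"
      by (intro tendsto_intros) (simp add: tendsto_norm_zero_iff)
    then show "(\<lambda>n. s n x) \<longlonglongrightarrow> 0" by (simp add: s_def)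
  qed
  have "(\<lambda>n. integral\<^sup>L (lebesgue_on {0..L}) (s n)) \<longlonglongrightarrow> integral\<^sup>L (lebesgue_on {0..L}) (\<lambda>x. 0::real)"
  proof (rule integral_dominated_convergence[where w = "\<lambda>_. (2 * B')\<^sup>2"])
    show "(\<lambda>x. 0::real) \<in> borel_measurable (lebesgue_on {0..L})" by simp
    show "s i \<in> borel_measurable (lebesgue_on {0..L})" for i by (rule sm)
    show "integrable (lebesgue_on {0..L}) (\<lambda>_. (2 * B')\<^sup>2)"
      by (intro finite_measure.integrable_const fm_on)
    show "AE x in lebesgue_on {0..L}. (\<lambda>i. s i x) \<longlonglongrightarrow> 0" by (rule lim)
    show "AE x in lebesgue_on {0..L}. norm (s i x) \<le> (2 * B')\<^sup>2" for i
      by (intro AE_I2) (use bound in auto)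
  qed
  then have "(\<lambda>n. integral\<^sup>L (lebesgue_on {0..L}) (s n)) \<longlonglongrightarrow> 0" by simp
  then obtain n where "norm (integral\<^sup>L (lebesgue_on {0..L}) (s n) - 0) < \<epsilon>"
    using e LIMSEQ_D by blast
  then have "integral\<^sup>L (lebesgue_on {0..L}) (s n) < \<epsilon>" by simp
  then show ?thesis using kc[of n] k0[of n] unfolding s_def by blast
qed

definition trunc :: "real \<Rightarrow> (real \<Rightarrow> complex) \<Rightarrow> real \<Rightarrow> complex" where
  "trunc B f x = (if cmod (f x) \<le> B then f x else 0)"

lemma trunc_meas:
  assumes "f \<in> borel_measurable (lebesgue_on {0..L})"
  shows "trunc B f \<in> borel_measurable (lebesgue_on {0..L})"
  unfolding trunc_def[abs_def] using assms by measurable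

lemma trunc_bound: "cmod (trunc B f x) \<le> max B 0"
  by (auto simp: trunc_def)

lemma trunc_approx:
  assumes f: "f \<in> L2 L" and e: "\<epsilon> > 0"
  shows "\<exists>B. (LINT x|lebesgue_on {0..L}. (cmod (f x - trunc B f x))\<^sup>2) < \<epsilon>"
proof -
  define s where "s n x = (cmod (f x - trunc (real n) f x))\<^sup>2" for n x
  have fm: "f \<in> borel_measurable (lebesgue_on {0..L})" using L2_D[OF f] by simp
  have "(\<lambda>n. integral\<^sup>L (lebesgue_on {0..L}) (s n)) \<longlonglongrightarrow> integral\<^sup>L (lebesgue_on {0..L}) (\<lambda>x. 0::real)"
  proof (rule integral_dominated_convergence[where w = "\<lambda>x. (cmod (f x))\<^sup>2"])
    show "(\<lambda>x. 0::real) \<in> borel_measurable (lebesgue_on {0..L})" by simp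
    show "s i \<in> borel_measurable (lebesgue_on {0..L})" for i
      unfolding s_def using fm trunc_meas[OF fm] by measurable
    show "integrable (lebesgue_on {0..L}) (\<lambda>x. (cmod (f x))\<^sup>2)" using L2_D[OF f] by simp
    show "AE x in lebesgue_on {0..L}. (\<lambda>i. s i x) \<longlonglongrightarrow> 0"
    proof (intro AE_I2 tendsto_eventually)
      fix x
      obtain N :: nat where "cmod (f x) < real N" using reals_Archimedean2 by blast
      then show "\<forall>\<^sub>F n in sequentially. s n x = 0"
        unfolding eventually_sequentially s_def trunc_def
        by (intro exI[of _ N]) auto
    qed
    show "AE x in lebesgue_on {0..L}. norm (s i x) \<le> (cmod (f x))\<^sup>2" for i
      by (intro AE_I2) (simp add: s_def trunc_def)
  qed
  then have "(\<lambda>n. integral\<^sup>L (lebesgue_on {0..L}) (s n)) \<longlonglongrightarrow> 0" by simp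
  then obtain n where "norm (integral\<^sup>L (lebesgue_on {0..L}) (s n) - 0) < \<epsilon>"
    using e LIMSEQ_D by blast
  then show ?thesis unfolding s_def by auto
qed

lemma TP_cont:
  assumes "TP L P"
  shows "continuous_on S P"
proof -
  obtain F c where F: "finite F" "\<And>t. P t = (\<Sum>j\<in>F. c j * ee L j t)"
    using assms unfolding TP_def by blast
  have "P = (\<lambda>t. \<Sum>j\<in>F. c j * ee L j t)" using F(2) by auto
  then show ?thesis by (simp add: continuous_intros)
qed

lemma dense_TP:
  fixes L :: real
  assumes L: "L > 0" and f: "f \<in> L2 L" and e: "\<epsilon> > 0"
  shows "\<exists>P. TP L P \<and> l2_norm L (\<lambda>x. f x - P x) < \<epsilon>"
proof -
  define d where "d = \<epsilon>\<^sup>2 / 9"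
  have d: "d > 0" using e by (simp add: d_def)
  obtain B where B: "(LINT x|lebesgue_on {0..L}. (cmod (f x - trunc B f x))\<^sup>2) < d"
    using trunc_approx[OF f d] by blast
  have fm: "f \<in> borel_measurable (lebesgue_on {0..L})" using L2_D[OF f] by simp
  obtain k where k: "continuous_on {0..L} k" "k 0 = k L"
    "(LINT x|lebesgue_on {0..L}. (cmod (trunc B f x - k x))\<^sup>2) < d"
    using cont_approx[OF L trunc_meas[OF fm] trunc_bound d] by blast
  define \<eta> where "\<eta> = \<epsilon> / (3 * sqrt (L + 1))"
  have eta: "\<eta> > 0" using e L by (simp add: \<eta>_def)
  obtain P where P: "TP L P" "\<forall>t\<in>{0..L}. cmod (k t - P t) < \<eta>"
    using trig_approx[OF L k(1,2) eta] by blast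
  have fB: "trunc B f \<in> L2 L"
    by (rule L2_bounded[OF trunc_meas[OF fm] trunc_bound])
  have kL: "k \<in> L2 L" by (rule L2_cont[OF k(1)])
  have PL: "P \<in> L2 L" by (rule L2_cont[OF TP_cont[OF P(1)]])
  have i1: "integrable (lebesgue_on {0..L}) (\<lambda>x. (cmod (f x - trunc B f x))\<^sup>2)"
    using L2_D(2)[OF L2_diff[OF f fB]] .
  have i2: "integrable (lebesgue_on {0..L}) (\<lambda>x. (cmod (trunc B f x - k x))\<^sup>2)"
    using L2_D(2)[OF L2_diff[OF fB kL]] .
  have i3: "integrable (lebesgue_on {0..L}) (\<lambda>x. (cmod (k x - P x))\<^sup>2)"
    using L2_D(2)[OF L2_diff[OF kL PL]] .
  have i4: "integrable (lebesgue_on {0..L}) (\<lambda>x. (cmod (f x - P x))\<^sup>2)"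
    using L2_D(2)[OF L2_diff[OF f PL]] .
  have "(LINT x|lebesgue_on {0..L}. (cmod (k x - P x))\<^sup>2) \<le> (LINT x|lebesgue_on {0..L}. \<eta>\<^sup>2)"
  proof (rule integral_mono[OF i3])
    show "integrable (lebesgue_on {0..L}) (\<lambda>x. \<eta>\<^sup>2)"
      by (intro finite_measure.integrable_const fm_on)
    fix x assume "x \<in> space (lebesgue_on {0..L})"
    then have "cmod (k x - P x) < \<eta>" using P(2) by simp
    then show "(cmod (k x - P x))\<^sup>2 \<le> \<eta>\<^sup>2" by (intro power_mono) auto
  qed
  also have "\<dots> = L * \<eta>\<^sup>2" using L LINT_const_on_real[of 0 L] by simp
  also have "\<dots> < d"
  proof -
    have "L * \<eta>\<^sup>2 = L * \<epsilon>\<^sup>2 / (9 * (L + 1))"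
      using L by (simp add: \<eta>_def power_divide power_mult_distrib)
    also have "\<dots> < \<epsilon>\<^sup>2 / 9"
      using L e by (simp add: field_simps)
    finally show ?thesis by (simp add: d_def)
  qed
  finally have I3: "(LINT x|lebesgue_on {0..L}. (cmod (k x - P x))\<^sup>2) < d" .
  have "(LINT x|lebesgue_on {0..L}. (cmod (f x - P x))\<^sup>2) \<le>
        (LINT x|lebesgue_on {0..L}. 3 * (cmod (f x - trunc B f x))\<^sup>2 + 3 * (cmod (trunc B f x - k x))\<^sup>2 + 3 * (cmod (k x - P x))\<^sup>2)"
  proof (rule integral_mono[OF i4])
    show "integrable (lebesgue_on {0..L}) (\<lambda>x. 3 * (cmod (f x - trunc B f x))\<^sup>2 + 3 * (cmod (trunc B f x - k x))\<^sup>2 + 3 * (cmod (k x - P x))\<^sup>2)"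
      using i1 i2 i3 by (intro Bochner_Integration.integrable_add integrable_mult_right)
    fix x
    show "(cmod (f x - P x))\<^sup>2 \<le> 3 * (cmod (f x - trunc B f x))\<^sup>2 + 3 * (cmod (trunc B f x - k x))\<^sup>2 + 3 * (cmod (k x - P x))\<^sup>2"
      using sq_add3_le[of "f x - trunc B f x" "trunc B f x - k x" "k x - P x"] by simp
  qed
  also have "\<dots> = 3 * (LINT x|lebesgue_on {0..L}. (cmod (f x - trunc B f x))\<^sup>2) + 3 * (LINT x|lebesgue_on {0..L}. (cmod (trunc B f x - k x))\<^sup>2) + 3 * (LINT x|lebesgue_on {0..L}. (cmod (k x - P x))\<^sup>2)"
    using i1 i2 i3 by (simp add: Bochner_Integration.integral_add integrable_mult_right)
  also have "\<dots> < 3 * d + 3 * d + 3 * d"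
    using B k(3) I3 by linarith
  also have "\<dots> = \<epsilon>\<^sup>2" by (simp add: d_def)
  finally have "(LINT x|lebesgue_on {0..L}. (cmod (f x - P x))\<^sup>2) < \<epsilon>\<^sup>2" .
  then have "l2_norm L (\<lambda>x. f x - P x) < sqrt (\<epsilon>\<^sup>2)"
    unfolding l2_norm_def by (rule real_sqrt_less_mono)
  then show ?thesis using P(1) e by auto
qed

lemma ONB_bas:
  assumes L: "L > 0"
  shows "orthonormal_basis L (bas L)"
  unfolding orthonormal_basis_def
proof (intro conjI allI ballI)
  fix k show "bas L k \<in> L2 L" by (rule bas_L2)
next
  fix j k show "l2_inner L (bas L j) (bas L k) = (if j = k then 1 else 0)"
    by (rule inner_bas[OF L])
next
  fix f :: "real \<Rightarrow> complex" and \<epsilon> :: real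
  assume f: "f \<in> L2 L"
  show "0 < \<epsilon> \<longrightarrow> (\<exists>F c. finite F \<and> l2_norm L (\<lambda>x. f x - (\<Sum>k\<in>F. c k * bas L k x)) < \<epsilon>)"
  proof
    assume e: "0 < \<epsilon>"
    obtain P where P: "TP L P" "l2_norm L (\<lambda>x. f x - P x) < \<epsilon>"
      using dense_TP[OF L f e] by blast
    obtain F c where F: "finite F" "\<And>t. P t = (\<Sum>j\<in>F. c j * ee L j t)"
      using P(1) unfolding TP_def by blast
    have "P x = (\<Sum>k\<in>F. (c k * of_real (sqrt L)) * bas L k x)" for x
      unfolding F(2) bas_def using L by (intro sum.cong) auto
    then have "(\<lambda>x. f x - (\<Sum>k\<in>F. (c k * of_real (sqrt L)) * bas L k x)) = (\<lambda>x. f x - P x)"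
      by simp
    then show "\<exists>F c. finite F \<and> l2_norm L (\<lambda>x. f x - (\<Sum>k\<in>F. c k * bas L k x)) < \<epsilon>"
      using P(2) F(1) by (intro exI[of _ F] exI[of _ "\<lambda>k. c k * of_real (sqrt L)"]) simp
  qed
qed

lemma ONB_reflect:
  assumes "orthonormal_basis L e"
  shows "orthonormal_basis L (\<lambda>j. e (- j))"
  unfolding orthonormal_basis_def
proof (intro conjI allI ballI impI)
  fix k show "e (- k) \<in> L2 L" using assms by (simp add: orthonormal_basis_def)
next
  fix j k :: int show "l2_inner L (e (- j)) (e (- k)) = (if j = k then 1 else 0)"
    using assms by (simp add: orthonormal_basis_def)
next
  fix f :: "real \<Rightarrow> complex" and \<epsilon> :: real
  assume f: "f \<in> L2 L" and e: "0 < \<epsilon>"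
  obtain F c where F: "finite F" "l2_norm L (\<lambda>x. f x - (\<Sum>k\<in>F. c k * e k x)) < \<epsilon>"
    using assms f e unfolding orthonormal_basis_def by blast
  have "(\<Sum>k\<in>uminus ` F. c (- k) * e (- k) x) = (\<Sum>k\<in>F. c k * e k x)" for x
    by (subst sum.reindex) (auto intro: inj_onI)
  then show "\<exists>F c. finite F \<and> l2_norm L (\<lambda>x. f x - (\<Sum>k\<in>F. c k * e (- k) x)) < \<epsilon>"
    using F by (intro exI[of _ "uminus ` F"] exI[of _ "\<lambda>k. c (- k)"]) auto
qed



lemma l2_norm_sq: "(l2_norm L f)\<^sup>2 = (LINT x|lebesgue_on {0..L}. (cmod (f x))\<^sup>2)"
  unfolding l2_norm_def using L2_int_nonneg[of L f] by simp

lemma l2_norm_nonneg: "0 \<le> l2_norm L f"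
  unfolding l2_norm_def by simp

lemma norm_lincomb_bound:
  assumes f: "f \<in> L2 L" and v: "v \<in> L2 L"
  shows "l2_norm L (\<lambda>x. a * f x + c * v x) \<le> sqrt 2 * (cmod a * l2_norm L f + cmod c * l2_norm L v)"
proof -
  have i: "integrable (lebesgue_on {0..L}) (\<lambda>x. (cmod (f x))\<^sup>2)" "integrable (lebesgue_on {0..L}) (\<lambda>x. (cmod (v x))\<^sup>2)"
    using L2_D[OF f] L2_D[OF v] by auto
  have "(LINT x|lebesgue_on {0..L}. (cmod (a * f x + c * v x))\<^sup>2)
      \<le> (LINT x|lebesgue_on {0..L}. 2 * (cmod a)\<^sup>2 * (cmod (f x))\<^sup>2 + 2 * (cmod c)\<^sup>2 * (cmod (v x))\<^sup>2)"
  proof (rule integral_mono)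
    show "integrable (lebesgue_on {0..L}) (\<lambda>x. (cmod (a * f x + c * v x))\<^sup>2)"
      using L2_D(2)[OF L2_lincomb[OF f v]] .
    show "integrable (lebesgue_on {0..L}) (\<lambda>x. 2 * (cmod a)\<^sup>2 * (cmod (f x))\<^sup>2 + 2 * (cmod c)\<^sup>2 * (cmod (v x))\<^sup>2)"
      using i by (intro Bochner_Integration.integrable_add integrable_mult_right)
    fix x
    have "(cmod (a * f x + c * v x))\<^sup>2 \<le> 2 * (cmod (a * f x))\<^sup>2 + 2 * (cmod (c * v x))\<^sup>2"
      by (rule sq_add_le)
    then show "(cmod (a * f x + c * v x))\<^sup>2 \<le> 2 * (cmod a)\<^sup>2 * (cmod (f x))\<^sup>2 + 2 * (cmod c)\<^sup>2 * (cmod (v x))\<^sup>2"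
      by (simp add: norm_mult power_mult_distrib)
  qed
  also have "\<dots> = 2 * (cmod a * l2_norm L f)\<^sup>2 + 2 * (cmod c * l2_norm L v)\<^sup>2"
    using i by (simp add: Bochner_Integration.integral_add integrable_mult_right power_mult_distrib l2_norm_sq)
  also have "\<dots> \<le> 2 * (cmod a * l2_norm L f + cmod c * l2_norm L v)\<^sup>2"
  proof -
    have "0 \<le> cmod a * l2_norm L f" "0 \<le> cmod c * l2_norm L v"
      by (simp_all add: l2_norm_nonneg)
    then show ?thesis by (simp add: power2_sum l2_norm_nonneg)
  qed
  finally have "(l2_norm L (\<lambda>x. a * f x + c * v x))\<^sup>2 \<le> (sqrt 2 * (cmod a * l2_norm L f + cmod c * l2_norm L v))\<^sup>2"
    by (simp add: l2_norm_sq power_mult_distrib)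
  moreover have "0 \<le> sqrt 2 * (cmod a * l2_norm L f + cmod c * l2_norm L v)"
    by (simp add: l2_norm_nonneg)
  ultimately show ?thesis using power2_le_imp_le by blast
qed

lemma bl_rank_one:
  fixes m :: "(real \<Rightarrow> complex) \<Rightarrow> complex"
  assumes v: "v \<in> L2 L"
    and lin: "\<And>f g a b. f \<in> L2 L \<Longrightarrow> g \<in> L2 L \<Longrightarrow> m (\<lambda>x. a * f x + b * g x) = a * m f + b * m g"
    and aeq: "\<And>f g. f \<in> L2 L \<Longrightarrow> g \<in> L2 L \<Longrightarrow> ae_eq L f g \<Longrightarrow> m f = m g"
    and bnd: "\<And>f. f \<in> L2 L \<Longrightarrow> cmod (m f) \<le> K * l2_norm L f"
  shows "bounded_linear_L2 L (\<lambda>f x. a * f x + m f * v x)"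
  unfolding bounded_linear_L2_def
proof (intro conjI ballI allI impI)
  fix f assume "f \<in> L2 L"
  then show "(\<lambda>x. a * f x + m f * v x) \<in> L2 L" by (rule L2_lincomb[OF _ v])
next
  fix f g assume f: "f \<in> L2 L" and g: "g \<in> L2 L" and fg: "ae_eq L f g"
  have "m f = m g" by (rule aeq[OF f g fg])
  then show "ae_eq L (\<lambda>x. a * f x + m f * v x) (\<lambda>x. a * g x + m g * v x)"
    using fg unfolding ae_eq_def by (auto elim: AE_mp intro!: AE_I2)
next
  fix f g c d assume f: "f \<in> L2 L" and g: "g \<in> L2 L"
  show "ae_eq L (\<lambda>x. a * (c * f x + d * g x) + m (\<lambda>x. c * f x + d * g x) * v x)
     (\<lambda>x. c * (a * f x + m f * v x) + d * (a * g x + m g * v x))"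
    unfolding ae_eq_def lin[OF f g] by (intro AE_I2) (simp add: algebra_simps)
next
  show "\<exists>C. \<forall>f\<in>L2 L. l2_norm L (\<lambda>x. a * f x + m f * v x) \<le> C * l2_norm L f"
  proof (intro exI ballI)
    fix f assume f: "f \<in> L2 L"
    have "l2_norm L (\<lambda>x. a * f x + m f * v x) \<le> sqrt 2 * (cmod a * l2_norm L f + cmod (m f) * l2_norm L v)"
      by (rule norm_lincomb_bound[OF f v])
    also have "\<dots> \<le> sqrt 2 * (cmod a * l2_norm L f + (K * l2_norm L f) * l2_norm L v)"
      using bnd[OF f] by (intro mult_left_mono add_left_mono mult_right_mono) (auto simp: l2_norm_nonneg)
    also have "\<dots> = (sqrt 2 * (cmod a + K * l2_norm L v)) * l2_norm L f"
      by (simp add: algebra_simps)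
    finally show "l2_norm L (\<lambda>x. a * f x + m f * v x) \<le> (sqrt 2 * (cmod a + K * l2_norm L v)) * l2_norm L f" .
  qed
qed

lemma riesz_rank_one:
  fixes ell :: "(real \<Rightarrow> complex) \<Rightarrow> complex" and \<alpha> :: complex
  assumes onb: "orthonormal_basis L e" and \<alpha>: "\<alpha> \<noteq> 0" and v: "v \<in> L2 L"
    and lin: "\<And>f g a b. f \<in> L2 L \<Longrightarrow> g \<in> L2 L \<Longrightarrow> ell (\<lambda>x. a * f x + b * g x) = a * ell f + b * ell g"
    and aeq: "\<And>f g. f \<in> L2 L \<Longrightarrow> g \<in> L2 L \<Longrightarrow> ae_eq L f g \<Longrightarrow> ell f = ell g"
    and bnd: "\<And>f. f \<in> L2 L \<Longrightarrow> cmod (ell f) \<le> K * l2_norm L f"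
    and inv: "\<alpha> + ell v \<noteq> 0"
    and phi: "\<And>k. ae_eq L (\<lambda>x. \<alpha> * e k x + ell (e k) * v x) (\<phi> k)"
  shows "riesz_basis L \<phi>"
proof -
  define \<beta> where "\<beta> = \<alpha> + ell v"
  have b0: "\<beta> \<noteq> 0" using inv by (simp add: \<beta>_def)
  define T where "T = (\<lambda>f x. \<alpha> * f x + ell f * v x)"
  define m where "m = (\<lambda>f. - (ell f / \<beta>) / \<alpha>)"
  define S where "S = (\<lambda>f x. (1 / \<alpha>) * f x + m f * v x)"
  have bT: "bounded_linear_L2 L T" unfolding T_def by (rule bl_rank_one[OF v lin aeq bnd])
  have bS: "bounded_linear_L2 L S" unfolding S_def
  proof (rule bl_rank_one[OF v, where K = "K / (cmod \<beta> * cmod \<alpha>)"])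
    fix f g a b assume f: "f \<in> L2 L" and g: "g \<in> L2 L"
    show "m (\<lambda>x. a * f x + b * g x) = a * m f + b * m g"
      unfolding m_def lin[OF f g] by (simp add: field_simps) (simp add: add_divide_distrib)
  next
    fix f g assume "f \<in> L2 L" "g \<in> L2 L" "ae_eq L f g"
    then show "m f = m g" unfolding m_def using aeq by simp
  next
    fix f assume f: "f \<in> L2 L"
    have "cmod (m f) = cmod (ell f) / (cmod \<beta> * cmod \<alpha>)"
      unfolding m_def by (simp add: norm_divide norm_mult)
    also have "\<dots> \<le> K * l2_norm L f / (cmod \<beta> * cmod \<alpha>)"
      using bnd[OF f] by (intro divide_right_mono) auto
    finally show "cmod (m f) \<le> K / (cmod \<beta> * cmod \<alpha>) * l2_norm L f" by simp
  qed
  have TL2: "T f \<in> L2 L" if "f \<in> L2 L" for f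
    using that unfolding T_def by (rule L2_lincomb[OF _ v])
  have SL2: "S f \<in> L2 L" if "f \<in> L2 L" for f
    using that unfolding S_def by (rule L2_lincomb[OF _ v])
  have ST: "S (T f) = f" if f: "f \<in> L2 L" for f
  proof -
    have "ell (T f) = ell f * \<beta>"
      unfolding T_def lin[OF f v] by (simp add: \<beta>_def algebra_simps)
    then show ?thesis
      using inv \<alpha> unfolding S_def m_def \<beta>_def[symmetric]
      by (simp add: fun_eq_iff T_def field_simps)
  qed
  have TS: "T (S f) = f" if f: "f \<in> L2 L" for f
  proof -
    have "ell (S f) = (1 / \<alpha>) * ell f + m f * ell v"
      unfolding S_def by (rule lin[OF f v])
    also have "\<dots> = ell f * (\<beta> - ell v) / (\<alpha> * \<beta>)"
      using b0 \<alpha> unfolding m_def by (simp add: field_simps)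
    also have "\<beta> - ell v = \<alpha>" by (simp add: \<beta>_def)
    also have "ell f * \<alpha> / (\<alpha> * \<beta>) = ell f / \<beta>" using \<alpha> by simp
    finally have eS: "ell (S f) = ell f / \<beta>" .
    have "T (S f) = (\<lambda>x. \<alpha> * S f x + (ell f / \<beta>) * v x)"
      unfolding T_def eS ..
    also have "\<dots> = f"
      unfolding S_def m_def using \<alpha> b0 by (simp add: fun_eq_iff field_simps)
    finally show ?thesis .
  qed
  show ?thesis
    unfolding riesz_basis_def
  proof (intro exI conjI ballI allI)
    show "orthonormal_basis L e" by fact
    show "bounded_linear_L2 L T" by fact
    show "bounded_linear_L2 L S" by fact
    fix f assume f: "f \<in> L2 L"
    show "ae_eq L (S (T f)) f" using ST[OF f] by (simp add: ae_eq_def)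
    show "ae_eq L (T (S f)) f" using TS[OF f] by (simp add: ae_eq_def)
  next
    fix k show "ae_eq L (T (e k)) (\<phi> k)" unfolding T_def by (rule phi)
  qed
qed



lemma cont_bounded_on:
  assumes "continuous_on {0..L::real} u"
  obtains M where "M \<ge> 0" "\<And>x. x \<in> {0..L} \<Longrightarrow> cmod (u x) \<le> M"
proof -
  have "compact (u ` {0..L})" using assms by (intro compact_continuous_image) auto
  then obtain B where "\<forall>y\<in>u ` {0..L}. norm y \<le> B"
    using compact_imp_bounded bounded_iff by metis
  then show ?thesis using that[of "max B 0"] by force
qed

lemma integrable_mult_cont:
  assumes f: "f \<in> L2 L" and u: "continuous_on {0..L} u"
  shows "integrable (lebesgue_on {0..L}) (\<lambda>x. u x * f x)"
proof -
  obtain M where M: "M \<ge> 0" "\<And>x. x \<in> {0..L} \<Longrightarrow> cmod (u x) \<le> M"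
    using cont_bounded_on[OF u] by blast
  have um: "u \<in> borel_measurable (lebesgue_on {0..L})"
    by (intro continuous_imp_measurable_on_sets_lebesgue u) auto
  show ?thesis
  proof (rule Bochner_Integration.integrable_bound)
    show "integrable (lebesgue_on {0..L}) (\<lambda>x. M * cmod (f x))"
      using L2_integrable_norm[OF f] by (rule integrable_mult_right)
    show "(\<lambda>x. u x * f x) \<in> borel_measurable (lebesgue_on {0..L})"
      using um L2_D(1)[OF f] by measurable
    show "AE x in lebesgue_on {0..L}. norm (u x * f x) \<le> norm (M * cmod (f x))"
    proof (intro AE_I2)
      fix x assume "x \<in> space (lebesgue_on {0..L})"
      then have "cmod (u x) \<le> M" using M by simp
      then show "norm (u x * f x) \<le> norm (M * cmod (f x))"
        using M by (simp add: norm_mult mult_right_mono)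
    qed
  qed
qed

lemma integrable_ind_mult:
  fixes s L :: real
  assumes "integrable (lebesgue_on {0..L}) (h :: real \<Rightarrow> complex)"
  shows "integrable (lebesgue_on {0..L}) (\<lambda>x. indicator {0..s} x * h x)"
proof -
  have S: "{0..s} \<inter> {0..L} \<in> sets (lebesgue_on {0..L})"
    by (subst sets_restrict_space_iff) auto
  have "integrable (lebesgue_on {0..L}) (\<lambda>x. indicator ({0..s} \<inter> {0..L}) x *\<^sub>R h x)"
    by (intro integrable_mult_indicator assms S)
  then show ?thesis
    by (rule Bochner_Integration.integrable_cong[THEN iffD1, OF refl, rotated])
      (auto split: split_indicator)
qed

lemma LINT_ind:
  fixes s L :: real
  assumes "0 \<le> s" "s \<le> L"
  shows "(LINT x|lebesgue_on {0..L}. indicator {0..s} x * h x) = (LINT x|lebesgue_on {0..s}. (h x :: complex))"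
proof -
  have "(LINT x|lebesgue_on {0..L}. indicator {0..s} x * h x) =
        (LINT x|lebesgue. indicator {0..L} x *\<^sub>R (indicator {0..s} x * h x))"
    by (rule integral_restrict_space) simp
  also have "\<dots> = (LINT x|lebesgue. indicator {0..s} x *\<^sub>R h x)"
    using assms by (intro Bochner_Integration.integral_cong) (auto split: split_indicator)
  also have "\<dots> = (LINT x|lebesgue_on {0..s}. h x)"
    by (rule integral_restrict_space[symmetric]) simp
  finally show ?thesis .
qed

definition JJ :: "real \<Rightarrow> (real \<Rightarrow> complex) \<Rightarrow> (real \<Rightarrow> complex) \<Rightarrow> complex" where
  "JJ L u f = (LINT x|lebesgue_on {0..L}. u x * f x)"

definition FF :: "real \<Rightarrow> (real \<Rightarrow> complex) \<Rightarrow> (real \<Rightarrow> complex) \<Rightarrow> real \<Rightarrow> complex" where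
  "FF L u f s = (LINT x|lebesgue_on {0..L}. indicator {0..s} x * (u x * f x))"

lemma JJ_lin:
  assumes "f \<in> L2 L" "g \<in> L2 L" "continuous_on {0..L} u"
  shows "JJ L u (\<lambda>x. a * f x + b * g x) = a * JJ L u f + b * JJ L u g"
proof -
  have i: "integrable (lebesgue_on {0..L}) (\<lambda>x. u x * f x)" "integrable (lebesgue_on {0..L}) (\<lambda>x. u x * g x)"
    using integrable_mult_cont assms by auto
  have "JJ L u (\<lambda>x. a * f x + b * g x) = (LINT x|lebesgue_on {0..L}. a * (u x * f x) + b * (u x * g x))"
    unfolding JJ_def by (intro Bochner_Integration.integral_cong) (auto simp: algebra_simps)
  also have "\<dots> = a * JJ L u f + b * JJ L u g"
    using i unfolding JJ_def by (simp add: Bochner_Integration.integral_add integrable_mult_right)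
  finally show ?thesis .
qed

lemma FF_lin:
  assumes "f \<in> L2 L" "g \<in> L2 L" "continuous_on {0..L} u"
  shows "FF L u (\<lambda>x. a * f x + b * g x) s = a * FF L u f s + b * FF L u g s"
proof -
  have i: "integrable (lebesgue_on {0..L}) (\<lambda>x. indicator {0..s} x * (u x * f x))"
     "integrable (lebesgue_on {0..L}) (\<lambda>x. indicator {0..s} x * (u x * g x))"
    using integrable_ind_mult integrable_mult_cont assms by auto
  have "FF L u (\<lambda>x. a * f x + b * g x) s = (LINT x|lebesgue_on {0..L}. a * (indicator {0..s} x * (u x * f x)) + b * (indicator {0..s} x * (u x * g x)))"
    unfolding FF_def by (intro Bochner_Integration.integral_cong) (auto simp: algebra_simps)
  also have "\<dots> = a * FF L u f s + b * FF L u g s"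
    using i unfolding FF_def by (simp add: Bochner_Integration.integral_add integrable_mult_right)
  finally show ?thesis .
qed

lemma JJ_ae:
  assumes "f \<in> L2 L" "g \<in> L2 L" "ae_eq L f g" "continuous_on {0..L} u"
  shows "JJ L u f = JJ L u g"
proof -
  have um: "u \<in> borel_measurable (lebesgue_on {0..L})"
    by (intro continuous_imp_measurable_on_sets_lebesgue assms) auto
  show ?thesis unfolding JJ_def
  proof (rule integral_cong_AE)
    show "(\<lambda>x. u x * f x) \<in> borel_measurable (lebesgue_on {0..L})"
      using um L2_D(1)[OF assms(1)] by measurable
    show "(\<lambda>x. u x * g x) \<in> borel_measurable (lebesgue_on {0..L})"
      using um L2_D(1)[OF assms(2)] by measurable
    show "AE x in lebesgue_on {0..L}. u x * f x = u x * g x"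
      using assms(3) unfolding ae_eq_def by (rule eventually_mono) simp
  qed
qed

lemma FF_ae:
  assumes "f \<in> L2 L" "g \<in> L2 L" "ae_eq L f g" "continuous_on {0..L} u"
  shows "FF L u f s = FF L u g s"
proof -
  have um: "u \<in> borel_measurable (lebesgue_on {0..L})"
    by (intro continuous_imp_measurable_on_sets_lebesgue assms) auto
  show ?thesis unfolding FF_def
  proof (rule integral_cong_AE)
    show "(\<lambda>x. indicator {0..s} x * (u x * f x)) \<in> borel_measurable (lebesgue_on {0..L})"
      by (rule borel_measurable_integrable[OF integrable_ind_mult[OF integrable_mult_cont[OF assms(1,4)]]])
    show "(\<lambda>x. indicator {0..s} x * (u x * g x)) \<in> borel_measurable (lebesgue_on {0..L})"
      by (rule borel_measurable_integrable[OF integrable_ind_mult[OF integrable_mult_cont[OF assms(2,4)]]])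
    show "AE x in lebesgue_on {0..L}. indicator {0..s} x * (u x * f x) = indicator {0..s} x * (u x * g x)"
      using assms(3) unfolding ae_eq_def by (rule eventually_mono) simp
  qed
qed

lemma JJ_bound:
  assumes "f \<in> L2 L" "continuous_on {0..L} u" "\<And>x. x \<in> {0..L} \<Longrightarrow> cmod (u x) \<le> M"
  shows "cmod (JJ L u f) \<le> M * (LINT x|lebesgue_on {0..L}. cmod (f x))"
proof -
  have "cmod (JJ L u f) \<le> (LINT x|lebesgue_on {0..L}. cmod (u x * f x))"
    unfolding JJ_def by (rule integral_norm_bound)
  also have "\<dots> \<le> (LINT x|lebesgue_on {0..L}. M * cmod (f x))"
  proof (rule integral_mono)
    show "integrable (lebesgue_on {0..L}) (\<lambda>x. cmod (u x * f x))"
      using integrable_mult_cont[OF assms(1,2)] by simp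
    show "integrable (lebesgue_on {0..L}) (\<lambda>x. M * cmod (f x))"
      using L2_integrable_norm[OF assms(1)] by (rule integrable_mult_right)
    fix x assume "x \<in> space (lebesgue_on {0..L})"
    then show "cmod (u x * f x) \<le> M * cmod (f x)"
      using assms(3) by (simp add: norm_mult mult_right_mono)
  qed
  also have "\<dots> = M * (LINT x|lebesgue_on {0..L}. cmod (f x))" by simp
  finally show ?thesis .
qed

lemma FF_bound:
  assumes "f \<in> L2 L" "continuous_on {0..L} u" "\<And>x. x \<in> {0..L} \<Longrightarrow> cmod (u x) \<le> M"
  shows "cmod (FF L u f s) \<le> M * (LINT x|lebesgue_on {0..L}. cmod (f x))"
proof -
  have "cmod (FF L u f s) \<le> (LINT x|lebesgue_on {0..L}. cmod (indicator {0..s} x * (u x * f x)))"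
    unfolding FF_def by (rule integral_norm_bound)
  also have "\<dots> \<le> (LINT x|lebesgue_on {0..L}. M * cmod (f x))"
  proof (rule integral_mono)
    show "integrable (lebesgue_on {0..L}) (\<lambda>x. cmod (indicator {0..s} x * (u x * f x)))"
      using integrable_ind_mult[OF integrable_mult_cont[OF assms(1,2)]] by simp
    show "integrable (lebesgue_on {0..L}) (\<lambda>x. M * cmod (f x))"
      using L2_integrable_norm[OF assms(1)] by (rule integrable_mult_right)
    fix x assume x: "x \<in> space (lebesgue_on {0..L})"
    have "cmod (indicator {0..s} x * (u x * f x)) \<le> cmod (u x * f x)"
      by (simp split: split_indicator)
    also have "\<dots> \<le> M * cmod (f x)"
      using assms(3) x by (simp add: norm_mult mult_right_mono)
    finally show "cmod (indicator {0..s} x * (u x * f x)) \<le> M * cmod (f x)" .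
  qed
  also have "\<dots> = M * (LINT x|lebesgue_on {0..L}. cmod (f x))" by simp
  finally show ?thesis .
qed

lemma FF_cont:
  assumes "f \<in> L2 L" "continuous_on {0..L} u"
  shows "continuous_on {0..L} (FF L u f)"
proof -
  have i: "integrable (lebesgue_on {0..L}) (\<lambda>x. u x * f x)"
    by (rule integrable_mult_cont[OF assms])
  have "continuous_on {0..L} (\<lambda>s. LINT x|lebesgue_on {0..s}. u x * f x)"
    by (rule indefinite_integral_continuous_real[OF i])
  moreover have "FF L u f s = (LINT x|lebesgue_on {0..s}. u x * f x)" if "s \<in> {0..L}" for s
    unfolding FF_def using that by (intro LINT_ind) auto
  ultimately show ?thesis by (metis (no_types, lifting) continuous_on_cong)
qed

lemma L1_bound:
  assumes f: "f \<in> L2 L" and L: "L > 0"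
  shows "(LINT x|lebesgue_on {0..L}. cmod (f x)) \<le> sqrt L * l2_norm L f"
proof -
  have "(LINT x|lebesgue_on {0..L}. cmod (f x))\<^sup>2 \<le> L * (LINT x|lebesgue_on {0..L}. (cmod (f x))\<^sup>2)"
    by (rule L1_L2[OF f L])
  then have "(LINT x|lebesgue_on {0..L}. cmod (f x)) \<le> sqrt (L * (LINT x|lebesgue_on {0..L}. (cmod (f x))\<^sup>2))"
    by (rule real_le_rsqrt)
  then show ?thesis by (simp add: l2_norm_def real_sqrt_mult)
qed

lemma cnj_L2: "g \<in> L2 L \<Longrightarrow> (\<lambda>x. cnj (g x)) \<in> L2 L"
proof -
  assume g: "g \<in> L2 L"
  have c: "continuous_on UNIV (\<lambda>x::complex. cnj x)" by (intro continuous_intros)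
  have "(\<lambda>x. cnj (g x)) \<in> borel_measurable (lebesgue_on {0..L})"
    using measurable_compose[OF L2_D(1)[OF g] borel_measurable_continuous_onI[OF c]] .
  then show ?thesis using g unfolding L2_def by auto
qed

locale volt =
  fixes L :: real and a1 u1 a2 u2 a3 u3 G :: "real \<Rightarrow> complex"
  assumes L: "L > 0"
    and ca1: "continuous_on {0..L} a1" and cu1: "continuous_on {0..L} u1"
    and ca2: "continuous_on {0..L} a2" and cu2: "continuous_on {0..L} u2"
    and ca3: "continuous_on {0..L} a3" and cu3: "continuous_on {0..L} u3"
    and G: "G \<in> L2 L"
begin

definition R :: "(real \<Rightarrow> complex) \<Rightarrow> real \<Rightarrow> complex" where
  "R f s = a1 s * JJ L u1 f + a2 s * JJ L u2 f + a3 s * FF L u3 f s"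

definition ell0 :: "(real \<Rightarrow> complex) \<Rightarrow> complex" where
  "ell0 f = (LINT s|lebesgue_on {0..L}. G s * R f s)"

lemma R_cont: "f \<in> L2 L \<Longrightarrow> continuous_on {0..L} (R f)"
  unfolding R_def[abs_def]
  by (intro continuous_intros ca1 ca2 ca3 FF_cont cu3)

lemma R_lin: "f \<in> L2 L \<Longrightarrow> g \<in> L2 L \<Longrightarrow> R (\<lambda>x. a * f x + b * g x) s = a * R f s + b * R g s"
  unfolding R_def using JJ_lin[OF _ _ cu1] JJ_lin[OF _ _ cu2] FF_lin[OF _ _ cu3]
  by (simp add: algebra_simps)

lemma R_ae: "f \<in> L2 L \<Longrightarrow> g \<in> L2 L \<Longrightarrow> ae_eq L f g \<Longrightarrow> R f = R g"
  unfolding R_def[abs_def] using JJ_ae[OF _ _ _ cu1] JJ_ae[OF _ _ _ cu2] FF_ae[OF _ _ _ cu3]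
  by (simp add: fun_eq_iff)

lemma R_bound: "\<exists>C\<ge>0. \<forall>f\<in>L2 L. \<forall>s\<in>{0..L}. cmod (R f s) \<le> C * (LINT x|lebesgue_on {0..L}. cmod (f x))"
proof -
  obtain A1 where A1: "A1 \<ge> 0" "\<And>x. x \<in> {0..L} \<Longrightarrow> cmod (a1 x) \<le> A1" using cont_bounded_on[OF ca1] by blast
  obtain A2 where A2: "A2 \<ge> 0" "\<And>x. x \<in> {0..L} \<Longrightarrow> cmod (a2 x) \<le> A2" using cont_bounded_on[OF ca2] by blast
  obtain A3 where A3: "A3 \<ge> 0" "\<And>x. x \<in> {0..L} \<Longrightarrow> cmod (a3 x) \<le> A3" using cont_bounded_on[OF ca3] by blast
  obtain U1 where U1: "U1 \<ge> 0" "\<And>x. x \<in> {0..L} \<Longrightarrow> cmod (u1 x) \<le> U1" using cont_bounded_on[OF cu1] by blast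
  obtain U2 where U2: "U2 \<ge> 0" "\<And>x. x \<in> {0..L} \<Longrightarrow> cmod (u2 x) \<le> U2" using cont_bounded_on[OF cu2] by blast
  obtain U3 where U3: "U3 \<ge> 0" "\<And>x. x \<in> {0..L} \<Longrightarrow> cmod (u3 x) \<le> U3" using cont_bounded_on[OF cu3] by blast
  show ?thesis
  proof (intro exI[of _ "A1 * U1 + A2 * U2 + A3 * U3"] conjI ballI)
    show "0 \<le> A1 * U1 + A2 * U2 + A3 * U3" using A1 A2 A3 U1 U2 U3 by simp
    fix f s assume f: "f \<in> L2 L" and s: "s \<in> {0..L}"
    define I where "I = (LINT x|lebesgue_on {0..L}. cmod (f x))"
    have I: "I \<ge> 0" unfolding I_def by (intro integral_nonneg_AE) auto
    have b1: "cmod (a1 s * JJ L u1 f) \<le> A1 * (U1 * I)"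
      unfolding norm_mult I_def using A1 s JJ_bound[OF f cu1 U1(2)] by (intro mult_mono) auto
    have b2: "cmod (a2 s * JJ L u2 f) \<le> A2 * (U2 * I)"
      unfolding norm_mult I_def using A2 s JJ_bound[OF f cu2 U2(2)] by (intro mult_mono) auto
    have b3: "cmod (a3 s * FF L u3 f s) \<le> A3 * (U3 * I)"
      unfolding norm_mult I_def using A3 s FF_bound[OF f cu3 U3(2)] by (intro mult_mono) auto
    have "cmod (R f s) \<le> cmod (a1 s * JJ L u1 f) + cmod (a2 s * JJ L u2 f) + cmod (a3 s * FF L u3 f s)"
      unfolding R_def using norm_triangle_ineq[of "a1 s * JJ L u1 f + a2 s * JJ L u2 f" "a3 s * FF L u3 f s"]
        norm_triangle_ineq[of "a1 s * JJ L u1 f" "a2 s * JJ L u2 f"] by linarith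
    also have "\<dots> \<le> (A1 * U1 + A2 * U2 + A3 * U3) * I"
      using b1 b2 b3 by (simp add: algebra_simps)
    finally show "cmod (R f s) \<le> (A1 * U1 + A2 * U2 + A3 * U3) * (LINT x|lebesgue_on {0..L}. cmod (f x))"
      by (simp add: I_def)
  qed
qed

lemma ell0_int: "f \<in> L2 L \<Longrightarrow> integrable (lebesgue_on {0..L}) (\<lambda>s. G s * R f s)"
  using integrable_mult_cont[OF G R_cont] by (simp add: mult.commute)

lemma ell0_lin: "f \<in> L2 L \<Longrightarrow> g \<in> L2 L \<Longrightarrow> ell0 (\<lambda>x. a * f x + b * g x) = a * ell0 f + b * ell0 g"
proof -
  assume f: "f \<in> L2 L" and g: "g \<in> L2 L"
  have "ell0 (\<lambda>x. a * f x + b * g x) = (LINT s|lebesgue_on {0..L}. a * (G s * R f s) + b * (G s * R g s))"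
    unfolding ell0_def R_lin[OF f g] by (simp add: algebra_simps)
  also have "\<dots> = a * ell0 f + b * ell0 g"
    using ell0_int[OF f] ell0_int[OF g] unfolding ell0_def
    by (simp add: Bochner_Integration.integral_add integrable_mult_right)
  finally show ?thesis .
qed

lemma ell0_ae: "f \<in> L2 L \<Longrightarrow> g \<in> L2 L \<Longrightarrow> ae_eq L f g \<Longrightarrow> ell0 f = ell0 g"
  unfolding ell0_def using R_ae by simp

lemma ell0_bound: "\<exists>K. \<forall>f\<in>L2 L. cmod (ell0 f) \<le> K * l2_norm L f"
proof -
  obtain C where C: "C \<ge> 0" "\<And>f s. f \<in> L2 L \<Longrightarrow> s \<in> {0..L} \<Longrightarrow> cmod (R f s) \<le> C * (LINT x|lebesgue_on {0..L}. cmod (f x))"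
    using R_bound by blast
  define A where "A = (LINT x|lebesgue_on {0..L}. cmod (G x))"
  have A: "A \<ge> 0" unfolding A_def by (intro integral_nonneg_AE) auto
  show ?thesis
  proof (intro exI[of _ "A * C * sqrt L"] ballI)
    fix f assume f: "f \<in> L2 L"
    define I where "I = (LINT x|lebesgue_on {0..L}. cmod (f x))"
    have I: "I \<le> sqrt L * l2_norm L f" unfolding I_def by (rule L1_bound[OF f L])
    have "cmod (ell0 f) \<le> (LINT s|lebesgue_on {0..L}. cmod (G s * R f s))"
      unfolding ell0_def by (rule integral_norm_bound)
    also have "\<dots> \<le> (LINT s|lebesgue_on {0..L}. cmod (G s) * (C * I))"
    proof (rule integral_mono)
      show "integrable (lebesgue_on {0..L}) (\<lambda>s. cmod (G s * R f s))"
        using ell0_int[OF f] by simp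
      show "integrable (lebesgue_on {0..L}) (\<lambda>s. cmod (G s) * (C * I))"
        using L2_integrable_norm[OF G] by (rule integrable_mult_left)
      fix s assume "s \<in> space (lebesgue_on {0..L})"
      then have "cmod (R f s) \<le> C * I" using C(2)[OF f] by (simp add: I_def)
      then show "cmod (G s * R f s) \<le> cmod (G s) * (C * I)"
        by (simp add: norm_mult mult_left_mono)
    qed
    also have "\<dots> = A * C * I" by (simp add: A_def)
    also have "\<dots> \<le> A * C * (sqrt L * l2_norm L f)"
      using A C(1) I by (intro mult_left_mono) auto
    finally show "cmod (ell0 f) \<le> A * C * sqrt L * l2_norm L f" by (simp add: mult_ac)
  qed
qed

definition ellT :: "(real \<Rightarrow> complex) \<Rightarrow> complex" where
  "ellT f = of_real (sqrt L) * (ell0 f - JJ L (\<lambda>_. 1) f / of_real L * ell0 (\<lambda>_. 1))"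

lemma ellT_lin: "f \<in> L2 L \<Longrightarrow> g \<in> L2 L \<Longrightarrow> ellT (\<lambda>x. a * f x + b * g x) = a * ellT f + b * ellT g"
  unfolding ellT_def using ell0_lin JJ_lin[of f L g "\<lambda>_. 1" a b]
  by (simp add: algebra_simps add_divide_distrib diff_divide_distrib)

lemma ellT_ae: "f \<in> L2 L \<Longrightarrow> g \<in> L2 L \<Longrightarrow> ae_eq L f g \<Longrightarrow> ellT f = ellT g"
  unfolding ellT_def using ell0_ae JJ_ae[of f L g "\<lambda>_. 1"] by simp

lemma ellT_bound: "\<exists>K. \<forall>f\<in>L2 L. cmod (ellT f) \<le> K * l2_norm L f"
proof -
  obtain K where K: "\<And>f. f \<in> L2 L \<Longrightarrow> cmod (ell0 f) \<le> K * l2_norm L f" using ell0_bound by blast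
  define c where "c = cmod (ell0 (\<lambda>_. 1)) / L"
  have c: "c \<ge> 0" using L by (simp add: c_def)
  show ?thesis
  proof (intro exI[of _ "sqrt L * (K + c * sqrt L)"] ballI)
    fix f assume f: "f \<in> L2 L"
    have J: "cmod (JJ L (\<lambda>_. 1) f) \<le> sqrt L * l2_norm L f"
      using JJ_bound[OF f, of "\<lambda>_. 1" 1] L1_bound[OF f L] by simp
    have "cmod (ellT f) = sqrt L * cmod (ell0 f - JJ L (\<lambda>_. 1) f / of_real L * ell0 (\<lambda>_. 1))"
      unfolding ellT_def using L by (simp add: norm_mult)
    also have "\<dots> \<le> sqrt L * (cmod (ell0 f) + cmod (JJ L (\<lambda>_. 1) f) * c)"
    proof -
      have "cmod (ell0 f - JJ L (\<lambda>_. 1) f / of_real L * ell0 (\<lambda>_. 1)) \<le> cmod (ell0 f) + cmod (JJ L (\<lambda>_. 1) f / of_real L * ell0 (\<lambda>_. 1))"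
        by (rule norm_triangle_ineq4)
      also have "cmod (JJ L (\<lambda>_. 1) f / of_real L * ell0 (\<lambda>_. 1)) = cmod (JJ L (\<lambda>_. 1) f) * c"
        using L by (simp add: c_def norm_mult norm_divide)
      finally show ?thesis by (rule mult_left_mono) (simp add: less_imp_le[OF L])
    qed
    also have "\<dots> \<le> sqrt L * (K * l2_norm L f + (sqrt L * l2_norm L f) * c)"
    proof (rule mult_left_mono)
      show "cmod (ell0 f) + cmod (JJ L (\<lambda>_. 1) f) * c \<le> K * l2_norm L f + sqrt L * l2_norm L f * c"
        using K[OF f] J c by (intro add_mono mult_right_mono)
      show "0 \<le> sqrt L" using L by simp
    qed
    also have "\<dots> = sqrt L * (K + c * sqrt L) * l2_norm L f" by (simp add: algebra_simps)
    finally show "cmod (ellT f) \<le> sqrt L * (K + c * sqrt L) * l2_norm L f" .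
  qed
qed

end



lemma JJ1: "JJ L (\<lambda>_. 1) f = (LINT x|lebesgue_on {0..L}. f x)"
  by (simp add: JJ_def)

lemma int_bas: "L > 0 \<Longrightarrow> (LINT x|lebesgue_on {0..L}. bas L k x) = (if k = 0 then of_real (sqrt L) else 0)"
proof -
  assume L: "L > 0"
  have "(LINT x|lebesgue_on {0..L}. bas L k x) = (LINT x|lebesgue_on {0..L}. ee L k x) / of_real (sqrt L)"
    unfolding bas_def by (rule integral_divide_zero)
  also have "\<dots> = (if k = 0 then of_real (sqrt L) else 0)"
  proof (cases "k = 0")
    case True
    have "complex_of_real L / complex_of_real (sqrt L) = complex_of_real (sqrt L)"
      using L sqrt_sq_c[of L] by (simp add: field_simps)
    then show ?thesis using True int_ee[OF L, of k] by simp
  next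
    case False then show ?thesis using int_ee[OF L, of k] by simp
  qed
  finally show ?thesis .
qed

lemma int_u_nz:
  fixes L :: real
  assumes L: "L > 0" and hyp: "\<forall>k::int. k \<noteq> 0 \<longrightarrow> lam L g 0 \<noteq> lam L g k"
  shows "(LINT x|lebesgue_on {0..L}. exp (- cnj (lam L g 0) * of_real x)) \<noteq> 0"
proof -
  define a where "a = - cnj (lam L g 0)"
  show ?thesis
  proof (cases "a = 0")
    case True
    then show ?thesis using int_exp_on[of L a] L by (simp add: a_def[symmetric])
  next
    case False
    have "exp (a * of_real L) \<noteq> 1"
    proof
      assume "exp (a * of_real L) = 1"
      then obtain n :: int where n: "Re (a * of_real L) = 0" "Im (a * of_real L) = of_int (2 * n) * pi"
        by (auto simp: exp_eq_1)
      then have ra: "Re a = 0" and ia: "Im a = 2 * of_int n * pi / L" using L by (auto simp: field_simps)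
      have "n \<noteq> 0" using False ra ia by (auto simp: complex_eq_iff)
      moreover have "lam L g 0 = lam L g n"
      proof -
        have "lam L g 0 = - cnj a" by (simp add: a_def)
        also have "\<dots> = wj L n" using ra ia L by (simp add: complex_eq_iff wj_def field_simps)
        also have "\<dots> = lam L g n" using \<open>n \<noteq> 0\<close> by (simp add: lam_nz)
        finally show ?thesis .
      qed
      ultimately show False using hyp by blast
    qed
    then show ?thesis using int_exp_on[of L a] L False by (simp add: a_def[symmetric])
  qed
qed

lemma part3:
  fixes L :: real and g :: "real \<Rightarrow> complex"
  assumes L: "L > 0" and hyp: "\<forall>k::int. k \<noteq> 0 \<longrightarrow> lam L g 0 \<noteq> lam L g k"
  shows "riesz_basis L (\<lambda>k t. exp (- cnj (lam L g k) * of_real t))"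
proof -
  define a where "a = - cnj (lam L g 0)"
  define u where "u t = exp (a * of_real t)" for t
  define I where "I = (LINT x|lebesgue_on {0..L}. u x)"
  have I0: "I \<noteq> 0" unfolding I_def u_def a_def using int_u_nz[OF L hyp] .
  define ell where "ell f = JJ L (\<lambda>_. 1) f / of_real (sqrt L)" for f
  have sL: "sqrt L > 0" using L by simp
  have uc: "continuous_on {0..L} u" unfolding u_def by (intro continuous_intros)
  show ?thesis
  proof (rule riesz_rank_one[where e = "bas L" and \<alpha> = "of_real (sqrt L)" and v = "\<lambda>t. u t - 1"
        and ell = ell and K = 1])
    show "orthonormal_basis L (bas L)" by (rule ONB_bas[OF L])
    show "complex_of_real (sqrt L) \<noteq> 0" using sL by simp
    show "(\<lambda>t. u t - 1) \<in> L2 L" by (intro L2_cont continuous_intros uc)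
  next
    fix f g a b assume f: "f \<in> L2 L" and g: "g \<in> L2 L"
    show "ell (\<lambda>x. a * f x + b * g x) = a * ell f + b * ell g"
      unfolding ell_def JJ_lin[OF f g continuous_on_const] by (simp add: add_divide_distrib)
  next
    fix f g assume "f \<in> L2 L" "g \<in> L2 L" "ae_eq L f g"
    then show "ell f = ell g" unfolding ell_def using JJ_ae[OF _ _ _ continuous_on_const] by simp
  next
    fix f assume f: "f \<in> L2 L"
    have "cmod (ell f) = cmod (JJ L (\<lambda>_. 1) f) / sqrt L"
      unfolding ell_def using sL by (simp add: norm_divide)
    also have "\<dots> \<le> (sqrt L * l2_norm L f) / sqrt L"
    proof -
      have "cmod (JJ L (\<lambda>_. 1) f) \<le> 1 * (LINT x|lebesgue_on {0..L}. cmod (f x))"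
        by (rule JJ_bound[OF f continuous_on_const]) simp
      then show ?thesis using L1_bound[OF f L] sL by (intro divide_right_mono) auto
    qed
    also have "\<dots> = 1 * l2_norm L f" using sL by simp
    finally show "cmod (ell f) \<le> 1 * l2_norm L f" .
  next
    have iu: "integrable (lebesgue_on {0..L}) u" by (rule continuous_imp_integrable_real[OF uc])
    have "JJ L (\<lambda>_. 1) (\<lambda>t. u t - 1) = I - of_real L"
      unfolding JJ1 I_def using iu L by (simp add: Bochner_Integration.integral_diff measure_space_on scaleR_conv_of_real)
    then have "complex_of_real (sqrt L) + ell (\<lambda>t. u t - 1) = I / of_real (sqrt L)"
      unfolding ell_def using sL sqrt_sq_c[of L] L by (simp add: field_simps)
    then show "complex_of_real (sqrt L) + ell (\<lambda>t. u t - 1) \<noteq> 0" using I0 sL by simp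
  next
    fix k :: int
    have ek: "ell (bas L k) = (if k = 0 then 1 else 0)"
      unfolding ell_def JJ1 int_bas[OF L] using sL by simp
    show "ae_eq L (\<lambda>x. complex_of_real (sqrt L) * bas L k x + ell (bas L k) * (u x - 1))
        (\<lambda>t. exp (- cnj (lam L g k) * complex_of_real t))"
      unfolding ae_eq_def
    proof (intro AE_I2)
      fix x
      have b: "complex_of_real (sqrt L) * bas L k x = ee L k x" unfolding bas_def using sL by simp
      show "complex_of_real (sqrt L) * bas L k x + ell (bas L k) * (u x - 1) = exp (- cnj (lam L g k) * complex_of_real x)"
      proof (cases "k = 0")
        case True
        then show ?thesis unfolding b ek by (simp add: u_def a_def)
      next
        case False
        then show ?thesis unfolding b ek by (simp add: ee_def lam_nz cnj_wj)
      qed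
    qed
  qed
qed

context volt
begin

lemma ell0_scale: "f \<in> L2 L \<Longrightarrow> ell0 (\<lambda>x. c * f x) = c * ell0 f"
  using ell0_lin[of f f c 0] by simp

lemma ellT_scale: "f \<in> L2 L \<Longrightarrow> ellT (\<lambda>x. c * f x) = c * ellT f"
  using ellT_lin[of f f c 0] by simp

lemma ellT_one: "ellT (\<lambda>_. 1) = 0"
proof -
  have "JJ L (\<lambda>_. 1) (\<lambda>_. 1) = of_real L"
    unfolding JJ1 using L by (simp add: measure_space_on scaleR_conv_of_real)
  then show ?thesis unfolding ellT_def using L by simp
qed

lemma part1_generic:
  fixes g :: "real \<Rightarrow> complex"
  assumes Gd: "\<And>s. G s = cnj (g s)"
    and Rk: "\<And>k s. k \<noteq> 0 \<Longrightarrow> s \<in> {0..L} \<Longrightarrow>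
              R (ee L (-k)) s = exp (- wj L k * of_real s) / (wj L k - lam L g 0)"
  shows "riesz_basis L (phi L g)"
proof -
  obtain K where K: "\<And>f. f \<in> L2 L \<Longrightarrow> cmod (ellT f) \<le> K * l2_norm L f"
    using ellT_bound by blast
  have sL: "sqrt L > 0" using L by simp
  show ?thesis
  proof (rule riesz_rank_one[where e = "\<lambda>j. bas L (- j)" and \<alpha> = "of_real (sqrt L)" and v = "\<lambda>_. 1"
        and ell = ellT and K = K])
    show "orthonormal_basis L (\<lambda>j. bas L (- j))" by (rule ONB_reflect[OF ONB_bas[OF L]])
    show "complex_of_real (sqrt L) \<noteq> 0" using sL by simp
    show "(\<lambda>_. 1) \<in> L2 L" by (rule L2_const)
    show "complex_of_real (sqrt L) + ellT (\<lambda>_. 1) \<noteq> 0" using sL ellT_one by simp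
  next
    fix f g a b assume "f \<in> L2 L" "g \<in> L2 L"
    then show "ellT (\<lambda>x. a * f x + b * g x) = a * ellT f + b * ellT g" by (rule ellT_lin)
  next
    fix f g assume "f \<in> L2 L" "g \<in> L2 L" "ae_eq L f g"
    then show "ellT f = ellT g" by (rule ellT_ae)
  next
    fix f assume "f \<in> L2 L" then show "cmod (ellT f) \<le> K * l2_norm L f" by (rule K)
  next
    fix k :: int
    have bk: "bas L (- k) = (\<lambda>x. (1 / of_real (sqrt L)) * ee L (- k) x)"
      by (simp add: bas_def fun_eq_iff)
    have eb: "ellT (bas L (- k)) = (1 / of_real (sqrt L)) * ellT (ee L (- k))"
      unfolding bk by (rule ellT_scale[OF ee_L2])
    have sb: "complex_of_real (sqrt L) * bas L (- k) x = ee L (- k) x" for x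
      unfolding bas_def using sL by simp
    show "ae_eq L (\<lambda>x. complex_of_real (sqrt L) * bas L (- k) x + ellT (bas L (- k)) * 1) (phi L g k)"
      unfolding ae_eq_def
    proof (intro AE_I2)
      fix x assume x: "x \<in> space (lebesgue_on {0..L})"
      show "complex_of_real (sqrt L) * bas L (- k) x + ellT (bas L (- k)) * 1 = phi L g k x"
      proof (cases "k = 0")
        case True
        have "ee L (- k) = (\<lambda>_. 1)" using True by (simp add: fun_eq_iff)
        then have "ellT (bas L (- k)) = 0" unfolding eb using ellT_one by simp
        then show ?thesis unfolding sb using True by (simp add: phi_def)
      next
        case False
        define c where "c = 1 / (wj L k - lam L g 0) * (LINT s|lebesgue_on {0..L}. cnj (g s) * exp (- wj L k * of_real s))"
        have J0: "JJ L (\<lambda>_. 1) (ee L (- k)) = 0" unfolding JJ1 using int_ee[OF L, of "-k"] False by simp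
        have "ell0 (ee L (- k)) = (LINT s|lebesgue_on {0..L}. 1 / (wj L k - lam L g 0) * (cnj (g s) * exp (- wj L k * of_real s)))"
          unfolding ell0_def
          by (intro Bochner_Integration.integral_cong refl) (simp add: Rk[OF False] Gd)
        also have "\<dots> = c" unfolding c_def by (rule integral_mult_right_zero)
        finally have "ell0 (ee L (- k)) = c" .
        then have "ellT (ee L (- k)) = of_real (sqrt L) * c" unfolding ellT_def J0 by simp
        then have "ellT (bas L (- k)) = c" unfolding eb using sL by simp
        moreover have "ee L (- k) x = exp (- wj L k * of_real x)" by (simp add: ee_def wj_uminus)
        ultimately show ?thesis unfolding sb using False by (simp add: phi_def lam_nz c_def)
      qed
    qed
  qed
qed

end

lemma int_x_exp:
  fixes \<nu> :: complex
  assumes T: "0 \<le> T" and nu: "\<nu> \<noteq> 0"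
  shows "(LINT x|lebesgue_on {0..T}. of_real x * exp (\<nu> * of_real x)) =
         of_real T * exp (\<nu> * of_real T) / \<nu> - (exp (\<nu> * of_real T) - 1) / \<nu>\<^sup>2"
proof -
  have i: "integrable (lebesgue_on {0..T}) (\<lambda>x. of_real x * exp (\<nu> * of_real x))"
    by (intro continuous_imp_integrable_real continuous_intros)
  have "\<And>t. t \<in> {0..T} \<Longrightarrow> ((\<lambda>x. of_real x * exp (\<nu> * of_real x) / \<nu> - exp (\<nu> * of_real x) / \<nu>\<^sup>2)
      has_vector_derivative (of_real t * exp (\<nu> * of_real t))) (at t within {0..T})"
  proof -
    fix t :: real
    have "((\<lambda>z. z * exp (\<nu> * z) / \<nu> - exp (\<nu> * z) / \<nu>\<^sup>2) has_field_derivative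
        (of_real t * exp (\<nu> * of_real t))) (at (of_real t))"
      using nu by (auto intro!: derivative_eq_intros simp: field_simps power2_eq_square)
    from has_complex_derivative_imp_has_vector_derivative[OF has_field_derivative_at_within[OF this], of 0 T]
    show "((\<lambda>x. of_real x * exp (\<nu> * of_real x) / \<nu> - exp (\<nu> * of_real x) / \<nu>\<^sup>2)
      has_vector_derivative (of_real t * exp (\<nu> * of_real t))) (at t within {0..T})"
      by (simp add: o_def)
  qed
  then have "((\<lambda>x. of_real x * exp (\<nu> * of_real x)) has_integral
      ((of_real T * exp (\<nu> * of_real T) / \<nu> - exp (\<nu> * of_real T) / \<nu>\<^sup>2) -
       (of_real 0 * exp (\<nu> * of_real 0) / \<nu> - exp (\<nu> * of_real 0) / \<nu>\<^sup>2))) {0..T}"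
    by (intro fundamental_theorem_of_calculus T)
  then have "integral {0..T} (\<lambda>x. of_real x * exp (\<nu> * of_real x)) =
      of_real T * exp (\<nu> * of_real T) / \<nu> - (exp (\<nu> * of_real T) - 1) / \<nu>\<^sup>2"
    by (simp add: integral_unique diff_divide_distrib)
  then show ?thesis using lebesgue_integral_eq_integral[OF i] by simp
qed

lemma int_exp_on_s:
  fixes \<mu> :: complex
  assumes "0 \<le> s" "\<mu> \<noteq> 0"
  shows "(LINT x|lebesgue_on {0..s}. exp (\<mu> * of_real x)) = (exp (\<mu> * of_real s) - 1) / \<mu>"
  using int_exp_on[OF assms(1), of \<mu>] assms(2) by simp

lemma part1_caseA:
  fixes L :: real and g :: "real \<Rightarrow> complex"
  assumes L: "L > 0" and g: "g \<in> L2 L" and hyp: "\<forall>k::int. k \<noteq> 0 \<longrightarrow> lam L g 0 \<noteq> lam L g k"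
    and E1: "exp (lam L g 0 * of_real L) \<noteq> 1"
  shows "riesz_basis L (phi L g)"
proof -
  define l0 where "l0 = lam L g 0"
  define E where "E = exp (l0 * of_real L)"
  have E: "E \<noteq> 1" using E1 by (simp add: E_def l0_def)
  define C0 where "C0 = 1 / (1 - E)"
  interpret V: volt L "\<lambda>s. C0 * exp (- l0 * of_real s)" "\<lambda>x. exp (l0 * of_real x)" "\<lambda>_. 0" "\<lambda>_. 0"
    "\<lambda>s. C0 * (E - 1) * exp (- l0 * of_real s)" "\<lambda>x. exp (l0 * of_real x)" "\<lambda>s. cnj (g s)"
    by unfold_locales (auto intro!: continuous_intros cnj_L2 g L)
  show ?thesis
  proof (rule V.part1_generic)
    show "cnj (g s) = cnj (g s)" for s ..
  next
    fix k :: int and s :: real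
    assume k: "k \<noteq> 0" and s: "s \<in> {0..L}"
    define \<mu> where "\<mu> = l0 - wj L k"
    have mu: "\<mu> \<noteq> 0" using hyp k by (simp add: \<mu>_def l0_def lam_nz)
    have pw: "exp (l0 * of_real x) * ee L (- k) x = exp (\<mu> * of_real x)" for x
      by (simp add: ee_def wj_uminus \<mu>_def exp_add[symmetric] algebra_simps)
    have EL: "exp (\<mu> * of_real L) = E"
    proof -
      have "exp (\<mu> * of_real L) = E * exp (wj L (- k) * of_real L)"
        by (simp add: E_def \<mu>_def wj_uminus exp_add[symmetric] algebra_simps)
      then show ?thesis using exp_wj_L[of L "-k"] L by simp
    qed
    have J: "JJ L (\<lambda>x. exp (l0 * of_real x)) (ee L (- k)) = (E - 1) / \<mu>"
      unfolding JJ_def pw using int_exp_on[of L \<mu>] L mu EL by simp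
    have F: "FF L (\<lambda>x. exp (l0 * of_real x)) (ee L (- k)) s = (exp (\<mu> * of_real s) - 1) / \<mu>"
      unfolding FF_def using s by (simp add: LINT_ind pw int_exp_on_s mu)
    have XY: "exp (- l0 * of_real s) * exp (\<mu> * of_real s) = exp (- wj L k * of_real s)"
      by (simp add: \<mu>_def exp_add[symmetric] algebra_simps)
    have CE: "C0 * (E - 1) = -1" using E by (simp add: C0_def field_simps)
    have "V.R (ee L (- k)) s = C0 * (E - 1) * (exp (- l0 * of_real s) * exp (\<mu> * of_real s)) / \<mu>"
      unfolding V.R_def J F using mu by (simp add: field_simps)
    also have "\<dots> = exp (- wj L k * of_real s) / (wj L k - lam L g 0)"
      unfolding CE XY using mu by (simp add: \<mu>_def l0_def field_simps)
    finally show "V.R (ee L (- k)) s = exp (- wj L k * of_real s) / (wj L k - lam L g 0)" .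
  qed
qed

lemma l0_zero:
  fixes L :: real
  assumes L: "L > 0" and hyp: "\<forall>k::int. k \<noteq> 0 \<longrightarrow> lam L g 0 \<noteq> lam L g k"
    and E: "exp (lam L g 0 * of_real L) = 1"
  shows "lam L g 0 = 0"
proof -
  define a where "a = lam L g 0"
  obtain n :: int where n: "Re (a * of_real L) = 0" "Im (a * of_real L) = of_int (2 * n) * pi"
    using E by (auto simp: exp_eq_1 a_def)
  then have ra: "Re a = 0" and ia: "Im a = 2 * of_int n * pi / L" using L by (auto simp: field_simps)
  have "a = wj L n" using ra ia L by (simp add: complex_eq_iff wj_def field_simps)
  show ?thesis
  proof (cases "n = 0")
    case True
    then show ?thesis using \<open>a = wj L n\<close> by (simp add: a_def wj_def)
  next
    case False
    then have "a = lam L g n" using \<open>a = wj L n\<close> by (simp add: lam_nz)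
    then show ?thesis using hyp False by (simp add: a_def)
  qed
qed

lemma part1_caseB:
  fixes L :: real and g :: "real \<Rightarrow> complex"
  assumes L: "L > 0" and g: "g \<in> L2 L" and hyp: "\<forall>k::int. k \<noteq> 0 \<longrightarrow> lam L g 0 \<noteq> lam L g k"
    and l0: "lam L g 0 = 0"
  shows "riesz_basis L (phi L g)"
proof -
  interpret V: volt L "\<lambda>_. - 1 / of_real L" "\<lambda>x. of_real x" "\<lambda>s. of_real s / of_real L" "\<lambda>_. 1"
    "\<lambda>_. - 1" "\<lambda>_. 1" "\<lambda>s. cnj (g s)"
    using L by unfold_locales (auto intro!: continuous_intros cnj_L2 g)
  show ?thesis
  proof (rule V.part1_generic)
    show "cnj (g s) = cnj (g s)" for s ..
  next
    fix k :: int and s :: real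
    assume k: "k \<noteq> 0" and s: "s \<in> {0..L}"
    define \<nu> where "\<nu> = wj L (- k)"
    have nu: "\<nu> \<noteq> 0" using k L by (simp add: \<nu>_def wj_eq_0)
    have pw: "ee L (- k) x = exp (\<nu> * of_real x)" for x by (simp add: ee_def \<nu>_def)
    have EL: "exp (\<nu> * of_real L) = 1" using exp_wj_L[of L "-k"] L by (simp add: \<nu>_def)
    have J1: "JJ L (\<lambda>x. of_real x) (ee L (- k)) = of_real L / \<nu>"
      unfolding JJ_def pw using int_x_exp[of L \<nu>] L nu EL by simp
    have J2: "JJ L (\<lambda>_. 1) (ee L (- k)) = 0"
      unfolding JJ1 using int_ee[OF L, of "-k"] k by simp
    have F: "FF L (\<lambda>_. 1) (ee L (- k)) s = (exp (\<nu> * of_real s) - 1) / \<nu>"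
      unfolding FF_def using s by (simp add: LINT_ind pw int_exp_on_s nu)
    have "V.R (ee L (- k)) s = - exp (\<nu> * of_real s) / \<nu>"
      unfolding V.R_def J1 J2 F using nu L by (simp add: field_simps)
    also have "\<dots> = exp (- wj L k * of_real s) / (wj L k - lam L g 0)"
      using nu by (simp add: \<nu>_def l0 wj_uminus field_simps)
    finally show "V.R (ee L (- k)) s = exp (- wj L k * of_real s) / (wj L k - lam L g 0)" .
  qed
qed

lemma part1:
  fixes L :: real and g :: "real \<Rightarrow> complex"
  assumes L: "L > 0" and g: "g \<in> L2 L" and hyp: "\<forall>k::int. k \<noteq> 0 \<longrightarrow> lam L g 0 \<noteq> lam L g k"
  shows "riesz_basis L (phi L g)"
proof (cases "exp (lam L g 0 * of_real L) = 1")
  case True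
  show ?thesis using part1_caseB[OF L g hyp l0_zero[OF L hyp True]] .
next
  case False
  then show ?thesis using part1_caseA[OF L g hyp] by blast
qed

lemma norm_wj: "cmod (wj L k) = 2 * pi * \<bar>real_of_int k\<bar> / \<bar>L\<bar>"
  unfolding wj_alt norm_mult norm_of_real by (simp add: abs_mult)

lemma part2:
  fixes L :: real and g :: "real \<Rightarrow> complex"
  assumes L: "L > 0" and g: "g \<in> L2 L"
    and hyp2: "\<forall>k::int. k \<noteq> 0 \<longrightarrow>
           1 + 1 / (lam L g k - lam L g 0)
             * (LINT x|lebesgue_on {0..L}. cnj (g x) * exp (- lam L g k * of_real x)) \<noteq> 0"
  shows "(INF k::int. cmod (phi L g k L)) > 0"
proof -
  define l0 where "l0 = lam L g 0"
  define ck where "ck k = 1 / (lam L g k - l0) * (LINT x|lebesgue_on {0..L}. cnj (g x) * exp (- lam L g k * of_real x))" for k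
  have phiL: "phi L g k L = 1 + ck k" if "k \<noteq> 0" for k
  proof -
    have "exp (- lam L g k * of_real L) = 1"
      using exp_wj_L[of L "-k"] L that by (simp add: lam_nz wj_uminus)
    then show ?thesis using that by (simp add: phi_def ck_def l0_def)
  qed
  have phi0: "phi L g 0 L = 1" by (simp add: phi_def)
  define A where "A = (LINT x|lebesgue_on {0..L}. cmod (g x))"
  have A: "A \<ge> 0" unfolding A_def by (intro integral_nonneg_AE) auto
  have intb: "cmod (LINT x|lebesgue_on {0..L}. cnj (g x) * exp (- lam L g k * of_real x)) \<le> A" if k: "k \<noteq> 0" for k
  proof -
    have "cmod (LINT x|lebesgue_on {0..L}. cnj (g x) * exp (- lam L g k * of_real x))
        \<le> (LINT x|lebesgue_on {0..L}. cmod (cnj (g x) * exp (- lam L g k * of_real x)))"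
      by (rule integral_norm_bound)
    also have "\<dots> = A" unfolding A_def
    proof (intro Bochner_Integration.integral_cong refl)
      fix x
      have "cmod (exp (- lam L g k * of_real x)) = cmod (ee L (- k) x)"
        using k by (simp add: ee_def lam_nz wj_uminus)
      then show "cmod (cnj (g x) * exp (- lam L g k * of_real x)) = cmod (g x)"
        by (simp add: norm_mult norm_ee)
    qed
    finally show ?thesis .
  qed
  obtain N :: nat where N: "(2 * A + cmod l0 + 1) * L / (2 * pi) < real N"
    using reals_Archimedean2 by blast
  have big: "1 / 2 \<le> cmod (phi L g k L)" if kN: "\<not> (\<bar>k\<bar> \<le> int N)" for k
  proof -
    have k: "k \<noteq> 0" using kN by auto
    have "real N < \<bar>real_of_int k\<bar>" using kN by linarith
    then have "(2 * A + cmod l0 + 1) * L / (2 * pi) < \<bar>real_of_int k\<bar>" using N by linarith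
    then have "2 * A + cmod l0 + 1 < 2 * pi * \<bar>real_of_int k\<bar> / L"
      using L pi_gt_zero by (simp add: field_simps)
    also have "\<dots> = cmod (lam L g k)" using k L by (simp add: lam_nz norm_wj)
    finally have "2 * A + 1 < cmod (lam L g k) - cmod l0" by simp
    also have "\<dots> \<le> cmod (lam L g k - l0)" by (rule norm_triangle_ineq2)
    finally have D: "2 * A + 1 < cmod (lam L g k - l0)" .
    have "cmod (ck k) = cmod (LINT x|lebesgue_on {0..L}. cnj (g x) * exp (- lam L g k * of_real x)) / cmod (lam L g k - l0)"
      by (simp add: ck_def norm_mult norm_divide)
    also have "\<dots> \<le> A / cmod (lam L g k - l0)"
      using intb[OF k] by (intro divide_right_mono) auto
    also have "\<dots> \<le> A / (2 * A + 1)"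
    proof (rule divide_left_mono)
      show "0 \<le> A" by (rule A)
      show "2 * A + 1 \<le> cmod (lam L g k - l0)" using D by simp
      show "0 < cmod (lam L g k - l0) * (2 * A + 1)" using A D by (intro mult_pos_pos) auto
    qed
    also have "\<dots> \<le> 1 / 2" using A by (simp add: field_simps)
    finally have "cmod (ck k) \<le> 1 / 2" .
    then have "1 / 2 \<le> cmod (1 + ck k)"
      using norm_triangle_ineq2[of 1 "- ck k"] by simp
    then show ?thesis using phiL[OF k] by simp
  qed
  define S where "S = {- int N..int N}"
  have fS: "finite S" and neS: "S \<noteq> {}" by (auto simp: S_def)
  define m where "m = Min ((\<lambda>k. cmod (phi L g k L)) ` S)"
  have pos: "cmod (phi L g k L) > 0" for k
  proof (cases "k = 0")
    case True then show ?thesis by (simp add: phi0)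
  next
    case False
    then have "1 + ck k \<noteq> 0" using hyp2 by (simp add: ck_def l0_def)
    then show ?thesis using phiL[OF False] by simp
  qed
  have m: "m > 0" unfolding m_def using fS neS pos by (simp add: Min_gr_iff)
  define \<delta> where "\<delta> = min (1/2) m"
  have d: "\<delta> > 0" using m by (simp add: \<delta>_def)
  have "\<delta> \<le> cmod (phi L g k L)" for k
  proof (cases "\<bar>k\<bar> \<le> int N")
    case True
    then have "k \<in> S" by (auto simp: S_def)
    then have "m \<le> cmod (phi L g k L)" unfolding m_def using fS by (intro Min_le) auto
    then show ?thesis by (simp add: \<delta>_def)
  next
    case False
    then show ?thesis using big[OF False] by (simp add: \<delta>_def)
  qed
  then have "\<delta> \<le> (INF k::int. cmod (phi L g k L))"
    by (intro cINF_greatest) auto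
  then show ?thesis using d by linarith
qed


theorem proposition10:
  fixes L :: real and g :: "real \<Rightarrow> complex"
  assumes "L > 0"
    and "g \<in> L2 L"
    and "\<forall>k::int. k \<noteq> 0 \<longrightarrow> lam L g 0 \<noteq> lam L g k"
  shows "riesz_basis L (phi L g)
    \<and> ((\<forall>k::int. k \<noteq> 0 \<longrightarrow>
           1 + 1 / (lam L g k - lam L g 0)
             * (LINT x|lebesgue_on {0..L}. cnj (g x) * exp (- lam L g k * of_real x)) \<noteq> 0)
        \<longrightarrow> (INF k::int. cmod (phi L g k L)) > 0)
    \<and> riesz_basis L (\<lambda>k t. exp (- cnj (lam L g k) * of_real t))"
proof -
  have 1: "riesz_basis L (phi L g)" by (rule part1[OF assms])
  have 2: "(\<forall>k::int. k \<noteq> 0 \<longrightarrow>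
           1 + 1 / (lam L g k - lam L g 0)
             * (LINT x|lebesgue_on {0..L}. cnj (g x) * exp (- lam L g k * of_real x)) \<noteq> 0)
        \<longrightarrow> (INF k::int. cmod (phi L g k L)) > 0"
    using part2[OF assms(1,2)] by blast
  have 3: "riesz_basis L (\<lambda>k t. exp (- cnj (lam L g k) * of_real t))" by (rule part3[OF assms(1,3)])
  show ?thesis using 1 2 3 by blast
qed

end
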